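(* Let $E$ be an arbitrary directed graph and $K$ a field with involution. The Leavitt path algebra $L_K(E)$ is positive definite if and only if $K$ is positive definite.
   Context: A directed graph $E=(E^0,E^1,s,r)$ has vertex set $E^0$, edge set $E^1$ (arbitrary cardinalities) and source/range maps $s,r:E^1\to E^0$. A vertex $v$ is regular if $s^{-1}(v)$ is nonempty and finite. For a field $K$, $L_K(E)$ is the free $K$-algebra on $E^0\cup E^1\cup\{e^*: e\in E^1\}$ modulo: $vw=\delta_{v,w}v$ for $v,w\in E^0$; $s(e)e=er(e)=e$; $r(e)e^*=e^*s(e)=e^*$; $e^*f=\delta_{e,f}r(e)$ for $e,f\in E^1$; $v=\sum_{e\in s^{-1}(v)}ee^*$ for every regular vertex $v$. If $K$ has an involution $k\mapsto k^*$ (e.g. the identity), $L_K(E)$ is a $*$-algebra via $(\sum k_ia_ib_i^* )^*=\sum k_i^*b_ia_i^*$ for paths $a_i,b_i$ (with $(e_1\cdots e_n)^*=e_n^*\cdots e_1^*$, $v^*=v$). A $*$-ring (or $*$-field) is positive definite if for all $n$ and $x_1,\dots,x_n$, $\sum_{i=1}^n x_ix_i^*=0$ implies $x_i=0$ for all $i$. *)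

theory Defs
  imports Main
begin

text \<open>Generators of the free algebra: vertices, real edges, ghost edges (e^*).\<close>
datatype ('v, 'e) gen = Vx 'v | Ex 'e | Gx 'e

fun gstar :: "('v, 'e) gen \<Rightarrow> ('v, 'e) gen" where
  "gstar (Vx v) = Vx v"
| "gstar (Ex e) = Gx e"
| "gstar (Gx e) = Ex e"

text \<open>Elements of the (non-unital) free K-algebra on the generators are finitely
supported coefficient functions on nonempty words.\<close>
type_synonym ('v, 'e, 'k) fa = "('v, 'e) gen list \<Rightarrow> 'k"

definition gens :: "'v set \<Rightarrow> 'e set \<Rightarrow> ('v, 'e) gen set" where
  "gens V E1 = Vx ` V \<union> Ex ` E1 \<union> Gx ` E1"

definition fa_elems :: "'v set \<Rightarrow> 'e set \<Rightarrow> ('v, 'e, 'k::field) fa set" where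
  "fa_elems V E1 = {p. finite {w. p w \<noteq> 0} \<and>
      (\<forall>w. p w \<noteq> 0 \<longrightarrow> w \<noteq> [] \<and> set w \<subseteq> gens V E1)}"

definition fa_zero :: "('v, 'e, 'k::field) fa" where
  "fa_zero = (\<lambda>w. 0)"

definition fa_add :: "('v, 'e, 'k::field) fa \<Rightarrow> ('v, 'e, 'k) fa \<Rightarrow> ('v, 'e, 'k) fa" where
  "fa_add p q = (\<lambda>w. p w + q w)"

definition fa_diff :: "('v, 'e, 'k::field) fa \<Rightarrow> ('v, 'e, 'k) fa \<Rightarrow> ('v, 'e, 'k) fa" where
  "fa_diff p q = (\<lambda>w. p w - q w)"

definition fa_smult :: "'k::field \<Rightarrow> ('v, 'e, 'k) fa \<Rightarrow> ('v, 'e, 'k) fa" where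
  "fa_smult c p = (\<lambda>w. c * p w)"

definition fa_mult :: "('v, 'e, 'k::field) fa \<Rightarrow> ('v, 'e, 'k) fa \<Rightarrow> ('v, 'e, 'k) fa" where
  "fa_mult p q = (\<lambda>w. \<Sum>(u, v)\<in>{(u, v). u @ v = w}. p u * q v)"

definition mono :: "('v, 'e) gen list \<Rightarrow> ('v, 'e, 'k::field) fa" where
  "mono w0 = (\<lambda>w. if w = w0 then 1 else 0)"

text \<open>The involution on the free algebra induced by the involution of K:
(k g_1 ... g_n)^* = k^* g_n^* ... g_1^*, with v^* = v, (e)^* = e^*, (e^*)^* = e.\<close>
definition fa_star :: "('k \<Rightarrow> 'k) \<Rightarrow> ('v, 'e, 'k::field) fa \<Rightarrow> ('v, 'e, 'k) fa" where
  "fa_star cj p = (\<lambda>w. cj (p (map gstar (rev w))))"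

definition regular :: "'e set \<Rightarrow> ('e \<Rightarrow> 'v) \<Rightarrow> 'v \<Rightarrow> bool" where
  "regular E1 s v \<longleftrightarrow> {e \<in> E1. s e = v} \<noteq> {} \<and> finite {e \<in> E1. s e = v}"

text \<open>The defining relations of the Leavitt path algebra, as elements (lhs - rhs)
of the free algebra.\<close>
definition lpa_rels :: "'v set \<Rightarrow> 'e set \<Rightarrow> ('e \<Rightarrow> 'v) \<Rightarrow> ('e \<Rightarrow> 'v)
    \<Rightarrow> ('v, 'e, 'k::field) fa set" where
  "lpa_rels V E1 s r =
     {fa_diff (mono [Vx v, Vx w]) (if v = w then mono [Vx v] else fa_zero) | v w. v \<in> V \<and> w \<in> V}
   \<union> {fa_diff (mono [Vx (s e), Ex e]) (mono [Ex e]) | e. e \<in> E1}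
   \<union> {fa_diff (mono [Ex e, Vx (r e)]) (mono [Ex e]) | e. e \<in> E1}
   \<union> {fa_diff (mono [Vx (r e), Gx e]) (mono [Gx e]) | e. e \<in> E1}
   \<union> {fa_diff (mono [Gx e, Vx (s e)]) (mono [Gx e]) | e. e \<in> E1}
   \<union> {fa_diff (mono [Gx e, Ex f]) (if e = f then mono [Vx (r e)] else fa_zero) | e f. e \<in> E1 \<and> f \<in> E1}
   \<union> {fa_diff (mono [Vx v]) (\<lambda>w. \<Sum>e\<in>{e \<in> E1. s e = v}. mono [Ex e, Gx e] w) | v.
        v \<in> V \<and> regular E1 s v}"

inductive_set lpa_ideal :: "'v set \<Rightarrow> 'e set \<Rightarrow> ('e \<Rightarrow> 'v) \<Rightarrow> ('e \<Rightarrow> 'v)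
    \<Rightarrow> ('v, 'e, 'k::field) fa set"
  for V E1 s r where
  zero: "fa_zero \<in> lpa_ideal V E1 s r"
| rel: "x \<in> lpa_rels V E1 s r \<Longrightarrow> x \<in> lpa_ideal V E1 s r"
| add: "x \<in> lpa_ideal V E1 s r \<Longrightarrow> y \<in> lpa_ideal V E1 s r \<Longrightarrow> fa_add x y \<in> lpa_ideal V E1 s r"
| smult: "x \<in> lpa_ideal V E1 s r \<Longrightarrow> fa_smult c x \<in> lpa_ideal V E1 s r"
| left: "x \<in> lpa_ideal V E1 s r \<Longrightarrow> p \<in> fa_elems V E1 \<Longrightarrow> fa_mult p x \<in> lpa_ideal V E1 s r"
| right: "x \<in> lpa_ideal V E1 s r \<Longrightarrow> p \<in> fa_elems V E1 \<Longrightarrow> fa_mult x p \<in> lpa_ideal V E1 s r"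

definition is_graph :: "'v set \<Rightarrow> 'e set \<Rightarrow> ('e \<Rightarrow> 'v) \<Rightarrow> ('e \<Rightarrow> 'v) \<Rightarrow> bool" where
  "is_graph V E1 s r \<longleftrightarrow> s ` E1 \<subseteq> V \<and> r ` E1 \<subseteq> V"

definition field_involution :: "('k::field \<Rightarrow> 'k) \<Rightarrow> bool" where
  "field_involution cj \<longleftrightarrow> (\<forall>a b. cj (a + b) = cj a + cj b) \<and>
     (\<forall>a b. cj (a * b) = cj a * cj b) \<and> (\<forall>a. cj (cj a) = a)"

definition pos_def_field :: "('k::field \<Rightarrow> 'k) \<Rightarrow> bool" where
  "pos_def_field cj \<longleftrightarrow>
     (\<forall>(n::nat) (x::nat \<Rightarrow> 'k). (\<Sum>i<n. x i * cj (x i)) = 0 \<longrightarrow> (\<forall>i<n. x i = 0))"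

text \<open>L_K(E) is positive definite: for elements x_1..x_n of L_K(E) (represented by
elements of the free algebra, equality in L_K(E) = congruence modulo the ideal),
sum x_i x_i^* = 0 in L_K(E) implies x_i = 0 in L_K(E).\<close>
definition pos_def_lpa :: "'v set \<Rightarrow> 'e set \<Rightarrow> ('e \<Rightarrow> 'v) \<Rightarrow> ('e \<Rightarrow> 'v) \<Rightarrow> ('k::field \<Rightarrow> 'k) \<Rightarrow> bool" where
  "pos_def_lpa V E1 s r cj \<longleftrightarrow>
     (\<forall>(n::nat) (x::nat \<Rightarrow> ('v, 'e, 'k) fa).
        (\<forall>i<n. x i \<in> fa_elems V E1) \<longrightarrow>
        (\<lambda>w. \<Sum>i<n. fa_mult (x i) (fa_star cj (x i)) w) \<in> lpa_ideal V E1 s r \<longrightarrow>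
        (\<forall>i<n. x i \<in> lpa_ideal V E1 s r))"

end

theory Submission
  imports Defs
begin

definition supp :: "('v, 'e, 'k::field) fa \<Rightarrow> ('v, 'e) gen list set" where
  "supp p = {w. p w \<noteq> 0}"

lemma split_finite: "finite {(u, v). u @ v = (w::'a list)}"
proof -
  have "{(u, v). u @ v = w} \<subseteq> (\<lambda>i. (take i w, drop i w)) ` {0..length w}"
  proof
    fix x assume "x \<in> {(u, v). u @ v = w}"
    then obtain u v where x: "x = (u, v)" "w = u @ v" by auto
    then show "x \<in> (\<lambda>i. (take i w, drop i w)) ` {0..length w}"
      by (intro image_eqI[where x="length u"]) auto
  qed
  then show ?thesis by (rule finite_subset) simp
qed

lemma fa_mult_mono: "fa_mult (mono a) (mono b) = (mono (a @ b) :: ('v,'e,'k::field) fa)"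
  unfolding fa_mult_def
proof (rule ext)
  fix w :: "('v,'e) gen list"
  have "(\<Sum>(u, v)\<in>{(u, v). u @ v = w}. (mono a u :: 'k) * mono b v) =
     (\<Sum>x\<in>{(u, v). u @ v = w}. (if x = (a, b) then 1 else 0 :: 'k))"
    unfolding mono_def by (intro sum.cong) (auto split: if_splits)
  also have "\<dots> = (if w = a @ b then 1 else 0)"
    using split_finite[of w] by (auto simp: sum.delta' split: if_splits)
  finally show "(\<Sum>(u, v)\<in>{(u, v). u @ v = w}. (mono a u :: 'k) * mono b v) = mono (a @ b) w"
    by (simp add: mono_def)
qed

lemma fa_mult_diff_right: "fa_mult x (fa_diff p q) = fa_diff (fa_mult x p) (fa_mult x q)"
  unfolding fa_mult_def fa_diff_def
  by (rule ext) (simp add: split_def right_diff_distrib sum_subtractf)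

lemma fa_mult_diff_left: "fa_mult (fa_diff p q) x = fa_diff (fa_mult p x) (fa_mult q x)"
  unfolding fa_mult_def fa_diff_def
  by (rule ext) (simp add: split_def left_diff_distrib sum_subtractf)

lemma fa_mult_zero_left [simp]: "fa_mult fa_zero x = fa_zero"
  unfolding fa_mult_def fa_zero_def by (rule ext) simp

lemma fa_mult_zero_right [simp]: "fa_mult x fa_zero = fa_zero"
  unfolding fa_mult_def fa_zero_def by (rule ext) simp

lemma fa_mult_sum_right:
  "fa_mult x (\<lambda>w. \<Sum>i\<in>F. c i * f i w) = (\<lambda>w. \<Sum>i\<in>F. c i * fa_mult x (f i) w)"
  unfolding fa_mult_def
  by (rule ext) (simp add: split_def sum_distrib_left sum_distrib_right mult_ac
      flip: sum.swap[where A=F])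

lemma fa_mult_sum_left:
  "fa_mult (\<lambda>w. \<Sum>i\<in>F. c i * f i w) x = (\<lambda>w. \<Sum>i\<in>F. c i * fa_mult (f i) x w)"
  unfolding fa_mult_def
  by (rule ext) (simp add: split_def sum_distrib_left sum_distrib_right mult_ac
      flip: sum.swap[where A=F])

lemma fa_mult_nz:
  assumes "fa_mult p q w \<noteq> 0"
  shows "\<exists>u v. w = u @ v \<and> p u \<noteq> 0 \<and> q v \<noteq> 0"
proof -
  from assms obtain x where "x \<in> {(u, v). u @ v = w}" "(case x of (u, v) \<Rightarrow> p u * q v) \<noteq> 0"
    unfolding fa_mult_def by (meson sum.not_neutral_contains_not_neutral)
  then show ?thesis by (cases x) auto
qed

lemma fa_elemsI:
  "finite {w. p w \<noteq> 0} \<Longrightarrow> (\<And>w. p w \<noteq> 0 \<Longrightarrow> w \<noteq> [] \<and> set w \<subseteq> gens V E1)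
   \<Longrightarrow> p \<in> fa_elems V E1"
  unfolding fa_elems_def by auto

lemma fa_elemsD:
  "p \<in> fa_elems V E1 \<Longrightarrow> finite {w. p w \<noteq> 0}"
  "p \<in> fa_elems V E1 \<Longrightarrow> p w \<noteq> 0 \<Longrightarrow> w \<noteq> []"
  "p \<in> fa_elems V E1 \<Longrightarrow> p w \<noteq> 0 \<Longrightarrow> set w \<subseteq> gens V E1"
  unfolding fa_elems_def by auto

lemma fa_elems_mult:
  assumes p: "p \<in> fa_elems V E1" and q: "q \<in> fa_elems V E1"
  shows "fa_mult p q \<in> fa_elems V E1"
proof (rule fa_elemsI)
  have "{w. fa_mult p q w \<noteq> 0} \<subseteq> (\<lambda>(u, v). u @ v) ` ({u. p u \<noteq> 0} \<times> {v. q v \<noteq> 0})"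
    using fa_mult_nz by fastforce
  then show "finite {w. fa_mult p q w \<noteq> 0}"
    by (rule finite_subset) (use fa_elemsD(1)[OF p] fa_elemsD(1)[OF q] in auto)
next
  fix w assume "fa_mult p q w \<noteq> 0"
  then obtain u v where "w = u @ v" "p u \<noteq> 0" "q v \<noteq> 0" using fa_mult_nz by blast
  then show "w \<noteq> [] \<and> set w \<subseteq> gens V E1"
    using fa_elemsD[OF p] fa_elemsD[OF q] by auto
qed

lemma fa_elems_add:
  assumes p: "p \<in> fa_elems V E1" and q: "q \<in> fa_elems V E1"
  shows "fa_add p q \<in> fa_elems V E1"
proof (rule fa_elemsI)
  show "finite {w. fa_add p q w \<noteq> 0}"
    by (rule finite_subset[of _ "{w. p w \<noteq> 0} \<union> {w. q w \<noteq> 0}"])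
      (auto simp: fa_add_def fa_elemsD(1)[OF p] fa_elemsD(1)[OF q])
next
  fix w assume "fa_add p q w \<noteq> 0"
  then have "p w \<noteq> 0 \<or> q w \<noteq> 0" by (auto simp: fa_add_def)
  then show "w \<noteq> [] \<and> set w \<subseteq> gens V E1"
    using fa_elemsD[OF p] fa_elemsD[OF q] by blast
qed

lemma fa_elems_diff:
  assumes p: "p \<in> fa_elems V E1" and q: "q \<in> fa_elems V E1"
  shows "fa_diff p q \<in> fa_elems V E1"
proof (rule fa_elemsI)
  show "finite {w. fa_diff p q w \<noteq> 0}"
    by (rule finite_subset[of _ "{w. p w \<noteq> 0} \<union> {w. q w \<noteq> 0}"])
      (auto simp: fa_diff_def fa_elemsD(1)[OF p] fa_elemsD(1)[OF q])
next
  fix w assume "fa_diff p q w \<noteq> 0"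
  then have "p w \<noteq> 0 \<or> q w \<noteq> 0" by (auto simp: fa_diff_def)
  then show "w \<noteq> [] \<and> set w \<subseteq> gens V E1"
    using fa_elemsD[OF p] fa_elemsD[OF q] by blast
qed

lemma fa_elems_smult:
  assumes p: "p \<in> fa_elems V E1"
  shows "fa_smult c p \<in> fa_elems V E1"
proof (rule fa_elemsI)
  show "finite {w. fa_smult c p w \<noteq> 0}"
    by (rule finite_subset[of _ "{w. p w \<noteq> 0}"])
      (auto simp: fa_smult_def fa_elemsD(1)[OF p])
next
  fix w assume "fa_smult c p w \<noteq> 0"
  then show "w \<noteq> [] \<and> set w \<subseteq> gens V E1"
    using fa_elemsD[OF p] by (auto simp: fa_smult_def)
qed

lemma fa_elems_zero: "fa_zero \<in> fa_elems V E1"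
  by (rule fa_elemsI) (auto simp: fa_zero_def)

lemma fa_elems_mono: "w \<noteq> [] \<Longrightarrow> set w \<subseteq> gens V E1 \<Longrightarrow> (mono w :: ('v,'e,'k::field) fa) \<in> fa_elems V E1"
  by (rule fa_elemsI) (auto simp: mono_def split: if_splits)

lemma fa_elems_sum:
  assumes "finite F" "\<And>i. i \<in> F \<Longrightarrow> f i \<in> fa_elems V E1"
  shows "(\<lambda>w. \<Sum>i\<in>F. c i * f i w) \<in> fa_elems V E1"
  using assms
proof (induction F rule: finite_induct)
  case empty
  then show ?case using fa_elems_zero by (simp add: fa_zero_def)
next
  case (insert x F)
  have "(\<lambda>w. \<Sum>i\<in>insert x F. c i * f i w) = fa_add (fa_smult (c x) (f x)) (\<lambda>w. \<Sum>i\<in>F. c i * f i w)"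
    using insert by (auto simp: fa_add_def fa_smult_def)
  then show ?case using insert by (auto intro!: fa_elems_add fa_elems_smult)
qed


lemma gens_simps [simp]:
  "Vx a \<in> gens V E1 \<longleftrightarrow> a \<in> V" "Ex e \<in> gens V E1 \<longleftrightarrow> e \<in> E1" "Gx e \<in> gens V E1 \<longleftrightarrow> e \<in> E1"
  unfolding gens_def by auto

lemma fa_elems_sum1:
  assumes "finite F" "\<And>i. i \<in> F \<Longrightarrow> f i \<in> fa_elems V E1"
  shows "(\<lambda>w. \<Sum>i\<in>F. f i w) \<in> fa_elems V E1"
  using fa_elems_sum[OF assms, where c="\<lambda>_. 1"] by simp

locale lg =
  fixes V :: "'v set" and E1 :: "'e set" and s r :: "'e \<Rightarrow> 'v"
  assumes graph: "is_graph V E1 s r"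
begin

lemma s_in [simp]: "e \<in> E1 \<Longrightarrow> s e \<in> V" and r_in [simp]: "e \<in> E1 \<Longrightarrow> r e \<in> V"
  using graph unfolding is_graph_def by auto

lemma rels_elems: "x \<in> lpa_rels V E1 s r \<Longrightarrow> (x :: ('v,'e,'k::field) fa) \<in> fa_elems V E1"
  unfolding lpa_rels_def
  apply (elim UnE)
  apply (auto intro!: fa_elems_diff fa_elems_mono fa_elems_zero)
  apply (rule fa_elems_sum1)
   apply (auto simp: regular_def intro!: fa_elems_mono)
  done

lemma ideal_elems: "x \<in> lpa_ideal V E1 s r \<Longrightarrow> x \<in> fa_elems V E1"
  by (induction rule: lpa_ideal.induct)
    (auto intro: fa_elems_zero rels_elems fa_elems_add fa_elems_smult fa_elems_mult)

lemma ideal_diff: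
  assumes "x \<in> lpa_ideal V E1 s r" "y \<in> lpa_ideal V E1 s r"
  shows "fa_diff x y \<in> lpa_ideal V E1 s r"
proof -
  have "fa_diff x y = fa_add x (fa_smult (-1) y)"
    by (auto simp: fa_diff_def fa_add_def fa_smult_def)
  then show ?thesis using assms by (auto intro: lpa_ideal.intros)
qed

definition cong :: "('v,'e,'k::field) fa \<Rightarrow> ('v,'e,'k) fa \<Rightarrow> bool" where
  "cong p q \<longleftrightarrow> fa_diff p q \<in> lpa_ideal V E1 s r"

lemma cong_refl: "cong p p"
proof -
  have "fa_diff p p = fa_zero" by (auto simp: fa_diff_def fa_zero_def)
  then show ?thesis unfolding cong_def by (auto intro: lpa_ideal.intros)
qed

lemma cong_sym: "cong p q \<Longrightarrow> cong q p"
proof -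
  assume "cong p q"
  moreover have "fa_diff q p = fa_smult (-1) (fa_diff p q)"
    by (auto simp: fa_diff_def fa_smult_def)
  ultimately show ?thesis unfolding cong_def by (auto intro: lpa_ideal.intros)
qed

lemma cong_trans: "cong p q \<Longrightarrow> cong q t \<Longrightarrow> cong p t"
proof -
  assume "cong p q" "cong q t"
  moreover have "fa_diff p t = fa_add (fa_diff p q) (fa_diff q t)"
    by (auto simp: fa_diff_def fa_add_def)
  ultimately show ?thesis unfolding cong_def by (auto intro: lpa_ideal.intros)
qed

lemma cong_ideal: "cong p q \<Longrightarrow> q \<in> lpa_ideal V E1 s r \<Longrightarrow> p \<in> lpa_ideal V E1 s r"
proof -
  assume "cong p q" "q \<in> lpa_ideal V E1 s r"
  moreover have "p = fa_add (fa_diff p q) q"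
    by (auto simp: fa_diff_def fa_add_def)
  ultimately show ?thesis unfolding cong_def by (metis lpa_ideal.add)
qed

lemma cong_zero_iff: "cong p fa_zero \<longleftrightarrow> p \<in> lpa_ideal V E1 s r"
proof -
  have "fa_diff p fa_zero = p" by (auto simp: fa_diff_def fa_zero_def)
  then show ?thesis unfolding cong_def by simp
qed

lemma cong_sum:
  assumes "finite F" "\<And>i. i \<in> F \<Longrightarrow> cong (f i) (g i)"
  shows "cong (\<lambda>w. \<Sum>i\<in>F. c i * f i w) (\<lambda>w. \<Sum>i\<in>F. c i * g i w)"
  using assms
proof (induction F rule: finite_induct)
  case empty
  then show ?case using cong_refl by simp
next
  case (insert x F)
  have "fa_diff (\<lambda>w. \<Sum>i\<in>insert x F. c i * f i w) (\<lambda>w. \<Sum>i\<in>insert x F. c i * g i w)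
     = fa_add (fa_smult (c x) (fa_diff (f x) (g x)))
        (fa_diff (\<lambda>w. \<Sum>i\<in>F. c i * f i w) (\<lambda>w. \<Sum>i\<in>F. c i * g i w))"
    using insert by (auto simp: fa_add_def fa_smult_def fa_diff_def algebra_simps)
  then show ?case using insert unfolding cong_def by (auto intro: lpa_ideal.intros)
qed

definition LR :: "('v,'e) gen list \<Rightarrow> ('v,'e) gen list \<Rightarrow> ('v,'e,'k::field) fa \<Rightarrow> ('v,'e,'k) fa" where
  "LR A B p = (let p1 = (if A = [] then p else fa_mult (mono A) p) in
      (if B = [] then p1 else fa_mult p1 (mono B)))"

lemma cong_LR:
  assumes "cong p q" "set A \<subseteq> gens V E1" "set B \<subseteq> gens V E1"
  shows "cong (LR A B p) (LR A B q)"
proof -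
  have 1: "cong (if A = [] then p else fa_mult (mono A) p) (if A = [] then q else fa_mult (mono A) q)"
  proof (cases "A = []")
    case False
    then show ?thesis using assms unfolding cong_def
      by (auto simp: fa_mult_diff_right[symmetric] intro!: lpa_ideal.left fa_elems_mono)
  qed (use assms in auto)
  show ?thesis
  proof (cases "B = []")
    case False
    then show ?thesis using assms 1 unfolding cong_def LR_def Let_def
      by (auto simp: fa_mult_diff_left[symmetric] intro!: lpa_ideal.right fa_elems_mono)
  qed (use 1 in \<open>auto simp: LR_def\<close>)
qed

lemma LR_mono: "LR A B (mono m) = mono (A @ m @ B)"
  unfolding LR_def Let_def by (auto simp: fa_mult_mono)

lemma LR_zero: "LR A B fa_zero = fa_zero"
  unfolding LR_def Let_def by auto

lemma LR_sum: "LR A B (\<lambda>w. \<Sum>i\<in>F. c i * mono (m i) w) = (\<lambda>w. \<Sum>i\<in>F. c i * mono (A @ m i @ B) w)"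
  unfolding LR_def Let_def
  by (auto simp: fa_mult_sum_right fa_mult_sum_left fa_mult_mono)

lemma ctx_mono:
  "cong (mono m) (mono m' :: ('v,'e,'k::field) fa) \<Longrightarrow> set A \<subseteq> gens V E1 \<Longrightarrow> set B \<subseteq> gens V E1 \<Longrightarrow>
   cong (mono (A @ m @ B)) (mono (A @ m' @ B) :: ('v,'e,'k) fa)"
  using cong_LR[of "mono m :: ('v,'e,'k) fa" "mono m'" A B] by (simp only: LR_mono)

lemma ctx_zero:
  "cong (mono m) (fa_zero :: ('v,'e,'k::field) fa) \<Longrightarrow> set A \<subseteq> gens V E1 \<Longrightarrow> set B \<subseteq> gens V E1 \<Longrightarrow>
   cong (mono (A @ m @ B)) (fa_zero :: ('v,'e,'k::field) fa)"
  using cong_LR[of "mono m :: ('v,'e,'k) fa" "fa_zero" A B] by (simp only: LR_mono LR_zero)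

lemma ctx_sum:
  "cong (mono m) (\<lambda>w. \<Sum>i\<in>F. c i * mono (ms i) w :: 'k::field) \<Longrightarrow> set A \<subseteq> gens V E1 \<Longrightarrow> set B \<subseteq> gens V E1 \<Longrightarrow>
   cong (mono (A @ m @ B)) (\<lambda>w. \<Sum>i\<in>F. c i * mono (A @ ms i @ B) w :: 'k)"
  using cong_LR[of "mono m :: ('v,'e,'k) fa" "\<lambda>w. \<Sum>i\<in>F. c i * mono (ms i) w" A B] by (simp only: LR_mono LR_sum)

lemma relI: "x \<in> lpa_rels V E1 s r \<Longrightarrow> cong x fa_zero"
  by (simp add: cong_zero_iff lpa_ideal.rel)

lemma rel_cong: "fa_diff p q \<in> lpa_rels V E1 s r \<Longrightarrow> cong p q"
  unfolding cong_def by (rule lpa_ideal.rel)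

lemma r_vv: "a \<in> V \<Longrightarrow> cong (mono [Vx a, Vx a]) (mono [Vx a] :: ('v,'e,'k::field) fa)"
  by (rule rel_cong) (unfold lpa_rels_def, rule UnI1, rule UnI1, rule UnI1, rule UnI1, rule UnI1, rule UnI1, rule CollectI, rule exI[of _ a], rule exI[of _ a], simp)

lemma r_vv0: "a \<in> V \<Longrightarrow> b \<in> V \<Longrightarrow> a \<noteq> b \<Longrightarrow> cong (mono [Vx a, Vx b]) (fa_zero :: ('v,'e,'k::field) fa)"
  by (rule rel_cong) (unfold lpa_rels_def, rule UnI1, rule UnI1, rule UnI1, rule UnI1, rule UnI1, rule UnI1, rule CollectI, rule exI[of _ a], rule exI[of _ b], simp)

lemma r_se: "e \<in> E1 \<Longrightarrow> cong (mono [Vx (s e), Ex e]) (mono [Ex e] :: ('v,'e,'k::field) fa)"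
  by (rule rel_cong) (unfold lpa_rels_def, rule UnI1, rule UnI1, rule UnI1, rule UnI1, rule UnI1, rule UnI2, rule CollectI, rule exI[of _ e], simp)

lemma r_er: "e \<in> E1 \<Longrightarrow> cong (mono [Ex e, Vx (r e)]) (mono [Ex e] :: ('v,'e,'k::field) fa)"
  by (rule rel_cong) (unfold lpa_rels_def, rule UnI1, rule UnI1, rule UnI1, rule UnI1, rule UnI2, rule CollectI, rule exI[of _ e], simp)

lemma r_rg: "e \<in> E1 \<Longrightarrow> cong (mono [Vx (r e), Gx e]) (mono [Gx e] :: ('v,'e,'k::field) fa)"
  by (rule rel_cong) (unfold lpa_rels_def, rule UnI1, rule UnI1, rule UnI1, rule UnI2, rule CollectI, rule exI[of _ e], simp)

lemma r_gs: "e \<in> E1 \<Longrightarrow> cong (mono [Gx e, Vx (s e)]) (mono [Gx e] :: ('v,'e,'k::field) fa)"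
  by (rule rel_cong) (unfold lpa_rels_def, rule UnI1, rule UnI1, rule UnI2, rule CollectI, rule exI[of _ e], simp)

lemma r_ge: "e \<in> E1 \<Longrightarrow> cong (mono [Gx e, Ex e]) (mono [Vx (r e)] :: ('v,'e,'k::field) fa)"
  by (rule rel_cong) (unfold lpa_rels_def, rule UnI1, rule UnI2, rule CollectI, rule exI[of _ e], rule exI[of _ e], simp)

lemma r_ge0: "e \<in> E1 \<Longrightarrow> f \<in> E1 \<Longrightarrow> e \<noteq> f \<Longrightarrow> cong (mono [Gx e, Ex f]) (fa_zero :: ('v,'e,'k::field) fa)"
  by (rule rel_cong) (unfold lpa_rels_def, rule UnI1, rule UnI2, rule CollectI, rule exI[of _ e], rule exI[of _ f], simp)

lemma r_ck: "v \<in> V \<Longrightarrow> regular E1 s v \<Longrightarrow>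
  cong (mono [Vx v]) (\<lambda>w. \<Sum>e\<in>{e \<in> E1. s e = v}. mono [Ex e, Gx e] w :: 'k::field)"
  by (rule rel_cong) (unfold lpa_rels_def, rule UnI2, rule CollectI, rule exI[of _ v], simp)

lemma z_vE: assumes "a \<in> V" "e \<in> E1" "a \<noteq> s e"
  shows "cong (mono [Vx a, Ex e]) (fa_zero :: ('v,'e,'k::field) fa)"
proof -
  have 1: "cong (mono [Vx a, Ex e]) (mono [Vx a, Vx (s e), Ex e] :: ('v,'e,'k) fa)"
    using ctx_mono[OF cong_sym[OF r_se[OF assms(2)]], of "[Vx a]" "[]"] assms by simp
  have 2: "cong (mono [Vx a, Vx (s e), Ex e]) (fa_zero :: ('v,'e,'k) fa)"
    using ctx_zero[OF r_vv0[of a "s e"], of "[]" "[Ex e]"] assms by simp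
  show ?thesis using cong_trans[OF 1 2] .
qed

lemma z_vG: assumes "a \<in> V" "e \<in> E1" "a \<noteq> r e"
  shows "cong (mono [Vx a, Gx e]) (fa_zero :: ('v,'e,'k::field) fa)"
proof -
  have 1: "cong (mono [Vx a, Gx e]) (mono [Vx a, Vx (r e), Gx e] :: ('v,'e,'k) fa)"
    using ctx_mono[OF cong_sym[OF r_rg[OF assms(2)]], of "[Vx a]" "[]"] assms by simp
  have 2: "cong (mono [Vx a, Vx (r e), Gx e]) (fa_zero :: ('v,'e,'k) fa)"
    using ctx_zero[OF r_vv0[of a "r e"], of "[]" "[Gx e]"] assms by simp
  show ?thesis using cong_trans[OF 1 2] .
qed

lemma z_Ev: assumes "a \<in> V" "e \<in> E1" "r e \<noteq> a"
  shows "cong (mono [Ex e, Vx a]) (fa_zero :: ('v,'e,'k::field) fa)"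
proof -
  have 1: "cong (mono [Ex e, Vx a]) (mono [Ex e, Vx (r e), Vx a] :: ('v,'e,'k) fa)"
    using ctx_mono[OF cong_sym[OF r_er[OF assms(2)]], of "[]" "[Vx a]"] assms by simp
  have 2: "cong (mono [Ex e, Vx (r e), Vx a]) (fa_zero :: ('v,'e,'k) fa)"
    using ctx_zero[OF r_vv0[of "r e" a], of "[Ex e]" "[]"] assms by simp
  show ?thesis using cong_trans[OF 1 2] .
qed

lemma z_Gv: assumes "a \<in> V" "e \<in> E1" "s e \<noteq> a"
  shows "cong (mono [Gx e, Vx a]) (fa_zero :: ('v,'e,'k::field) fa)"
proof -
  have 1: "cong (mono [Gx e, Vx a]) (mono [Gx e, Vx (s e), Vx a] :: ('v,'e,'k) fa)"
    using ctx_mono[OF cong_sym[OF r_gs[OF assms(2)]], of "[]" "[Vx a]"] assms by simp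
  have 2: "cong (mono [Gx e, Vx (s e), Vx a]) (fa_zero :: ('v,'e,'k) fa)"
    using ctx_zero[OF r_vv0[of "s e" a], of "[Gx e]" "[]"] assms by simp
  show ?thesis using cong_trans[OF 1 2] .
qed

lemma z_EE: assumes "e \<in> E1" "f \<in> E1" "r e \<noteq> s f"
  shows "cong (mono [Ex e, Ex f]) (fa_zero :: ('v,'e,'k::field) fa)"
proof -
  have 1: "cong (mono [Ex e, Ex f]) (mono [Ex e, Vx (s f), Ex f] :: ('v,'e,'k) fa)"
    using ctx_mono[OF cong_sym[OF r_se[OF assms(2)]], of "[Ex e]" "[]"] assms by simp
  have 2: "cong (mono [Ex e, Vx (s f), Ex f]) (fa_zero :: ('v,'e,'k) fa)"
    using ctx_zero[OF z_Ev[of "s f" e], of "[]" "[Ex f]"] assms by simp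
  show ?thesis using cong_trans[OF 1 2] .
qed

lemma z_EG: assumes "e \<in> E1" "f \<in> E1" "r e \<noteq> r f"
  shows "cong (mono [Ex e, Gx f]) (fa_zero :: ('v,'e,'k::field) fa)"
proof -
  have 1: "cong (mono [Ex e, Gx f]) (mono [Ex e, Vx (r f), Gx f] :: ('v,'e,'k) fa)"
    using ctx_mono[OF cong_sym[OF r_rg[OF assms(2)]], of "[Ex e]" "[]"] assms by simp
  have 2: "cong (mono [Ex e, Vx (r f), Gx f]) (fa_zero :: ('v,'e,'k) fa)"
    using ctx_zero[OF z_Ev[of "r f" e], of "[]" "[Gx f]"] assms by simp
  show ?thesis using cong_trans[OF 1 2] .
qed

lemma z_GG: assumes "e \<in> E1" "f \<in> E1" "s e \<noteq> r f"
  shows "cong (mono [Gx e, Gx f]) (fa_zero :: ('v,'e,'k::field) fa)"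
proof -
  have 1: "cong (mono [Gx e, Gx f]) (mono [Gx e, Vx (r f), Gx f] :: ('v,'e,'k) fa)"
    using ctx_mono[OF cong_sym[OF r_rg[OF assms(2)]], of "[Gx e]" "[]"] assms by simp
  have 2: "cong (mono [Gx e, Vx (r f), Gx f]) (fa_zero :: ('v,'e,'k) fa)"
    using ctx_zero[OF z_Gv[of "r f" e], of "[]" "[Gx f]"] assms by simp
  show ?thesis using cong_trans[OF 1 2] .
qed

end


definition nw :: "'e list \<times> 'e list \<times> 'v \<Rightarrow> ('v, 'e) gen list" where
  "nw t = (case t of (\<mu>, \<nu>, j) \<Rightarrow> if \<mu> = [] \<and> \<nu> = [] then [Vx j] else map Ex \<mu> @ map Gx (rev \<nu>))"

lemma nw_simps [simp]:
  "nw ([], [], j) = [Vx j]"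
  "nw (e # \<mu>, \<nu>, j) = Ex e # map Ex \<mu> @ map Gx (rev \<nu>)"
  "nw (\<mu>, \<nu> @ [f], j) = map Ex \<mu> @ Gx f # map Gx (rev \<nu>)"
  unfolding nw_def by auto

lemma nw_nonempty [simp]: "nw t \<noteq> []"
  unfolding nw_def by (auto split: prod.splits)

context lg
begin

fun epath :: "'e list \<Rightarrow> 'v \<Rightarrow> bool" where
  "epath [] j = True"
| "epath (e # es) j = (e \<in> E1 \<and> r e = (case es of [] \<Rightarrow> j | f # _ \<Rightarrow> s f) \<and> epath es j)"

lemma epath_snoc: "epath (es @ [e]) j \<longleftrightarrow> epath es (s e) \<and> e \<in> E1 \<and> r e = j"
  by (induction es) (auto split: list.splits simp: Cons_eq_append_conv)

lemma epath_E1: "epath es j \<Longrightarrow> set es \<subseteq> E1"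
  by (induction es) auto

definition T :: "('e list \<times> 'e list \<times> 'v) set" where
  "T = {(\<mu>, \<nu>, j). epath \<mu> j \<and> epath \<nu> j \<and> j \<in> V}"

lemma nw_gens: "t \<in> T \<Longrightarrow> set (nw t) \<subseteq> gens V E1"
  unfolding T_def nw_def by (auto dest!: epath_E1)

definition NF :: "('v,'e) gen list \<Rightarrow> 'k::field itself \<Rightarrow> bool" where
  "NF w K \<longleftrightarrow> cong (mono w) (fa_zero :: ('v,'e,'k) fa) \<or>
      (\<exists>t\<in>T. cong (mono w) (mono (nw t) :: ('v,'e,'k) fa))"

lemma NF_zero: "cong (mono w) (fa_zero :: ('v,'e,'k::field) fa) \<Longrightarrow> NF w TYPE('k)"
  unfolding NF_def by simp

lemma NF_nw: "t \<in> T \<Longrightarrow> cong (mono w) (mono (nw t) :: ('v,'e,'k::field) fa) \<Longrightarrow> NF w TYPE('k)"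
  unfolding NF_def by blast

lemma NF_eq: "t \<in> T \<Longrightarrow> w = nw t \<Longrightarrow> NF w TYPE('k::field)"
  using NF_nw cong_refl by blast

lemma T_iff: "(\<mu>, \<nu>, j) \<in> T \<longleftrightarrow> epath \<mu> j \<and> epath \<nu> j \<and> j \<in> V"
  unfolding T_def by simp

lemma set_map_gens: "set es \<subseteq> E1 \<Longrightarrow> set (map Ex es) \<subseteq> gens V E1" "set es \<subseteq> E1 \<Longrightarrow> set (map Gx es) \<subseteq> gens V E1"
  by auto

lemma prep_V:
  assumes t: "(\<mu>, \<nu>, j) \<in> T" and a: "a \<in> V"
  shows "NF (Vx a # nw (\<mu>, \<nu>, j)) TYPE('k::field)"
proof (cases \<mu>)
  case (Cons f \<mu>')
  let ?R = "map Ex \<mu>' @ map Gx (rev \<nu>)"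
  have ep: "epath \<mu> j" "epath \<nu> j" "j \<in> V" using t by (auto simp: T_iff)
  have f: "f \<in> E1" and R: "set ?R \<subseteq> gens V E1"
    using ep Cons by (auto dest!: epath_E1)
  show ?thesis
  proof (cases "a = s f")
    case True
    have "cong (mono (Vx a # nw (\<mu>, \<nu>, j))) (mono (nw (\<mu>, \<nu>, j)) :: ('v,'e,'k) fa)"
      using ctx_mono[OF r_se[OF f], of "[]" ?R] Cons True R by simp
    then show ?thesis using NF_nw t by blast
  next
    case False
    have "cong (mono (Vx a # nw (\<mu>, \<nu>, j))) (fa_zero :: ('v,'e,'k) fa)"
      using ctx_zero[OF z_vE[OF a f False], of "[]" ?R] Cons R by simp
    then show ?thesis using NF_zero by blast
  qed
next
  case Nil
  have ep: "epath \<mu> j" "epath \<nu> j" "j \<in> V" using t by (auto simp: T_iff)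
  show ?thesis
  proof (cases \<nu> rule: rev_cases)
    case Nil
    show ?thesis
    proof (cases "a = j")
      case True
      then show ?thesis using r_vv[OF a] \<open>\<mu> = []\<close> Nil t NF_nw by fastforce
    next
      case False
      then show ?thesis using r_vv0[OF a ep(3) False] \<open>\<mu> = []\<close> Nil NF_zero by fastforce
    qed
  next
    case (snoc \<nu>0 f)
    let ?R = "map Gx (rev \<nu>0)"
    have f: "f \<in> E1" "r f = j" and R: "set ?R \<subseteq> gens V E1"
      using ep snoc by (auto simp: epath_snoc dest!: epath_E1)
    show ?thesis
    proof (cases "a = r f")
      case True
      have "cong (mono (Vx a # nw (\<mu>, \<nu>, j))) (mono (nw (\<mu>, \<nu>, j)) :: ('v,'e,'k) fa)"
        using ctx_mono[OF r_rg[OF f(1)], of "[]" ?R] \<open>\<mu> = []\<close> snoc True R by simp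
      then show ?thesis using NF_nw t by blast
    next
      case False
      have "cong (mono (Vx a # nw (\<mu>, \<nu>, j))) (fa_zero :: ('v,'e,'k) fa)"
        using ctx_zero[OF z_vG[OF a f(1) False], of "[]" ?R] \<open>\<mu> = []\<close> snoc R by simp
      then show ?thesis using NF_zero by blast
    qed
  qed
qed

lemma prep_E:
  assumes t: "(\<mu>, \<nu>, j) \<in> T" and e: "e \<in> E1"
  shows "NF (Ex e # nw (\<mu>, \<nu>, j)) TYPE('k::field)"
proof (cases \<mu>)
  case (Cons f \<mu>')
  let ?R = "map Ex \<mu>' @ map Gx (rev \<nu>)"
  have ep: "epath \<mu> j" "epath \<nu> j" "j \<in> V" using t by (auto simp: T_iff)
  have f: "f \<in> E1" and R: "set ?R \<subseteq> gens V E1"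
    using ep Cons by (auto dest!: epath_E1)
  show ?thesis
  proof (cases "r e = s f")
    case True
    have "(e # \<mu>, \<nu>, j) \<in> T" using ep Cons True e by (auto simp: T_iff)
    moreover have "Ex e # nw (\<mu>, \<nu>, j) = nw (e # \<mu>, \<nu>, j)" using Cons by simp
    ultimately show ?thesis using NF_eq by blast
  next
    case False
    have "cong (mono (Ex e # nw (\<mu>, \<nu>, j))) (fa_zero :: ('v,'e,'k) fa)"
      using ctx_zero[OF z_EE[OF e f False], of "[]" ?R] Cons R by simp
    then show ?thesis using NF_zero by blast
  qed
next
  case Nil
  have ep: "epath \<mu> j" "epath \<nu> j" "j \<in> V" using t by (auto simp: T_iff)
  show ?thesis
  proof (cases \<nu> rule: rev_cases)
    case Nil
    show ?thesis
    proof (cases "r e = j")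
      case True
      have "([e], [], j) \<in> T" using True e ep by (auto simp: T_iff)
      moreover have "cong (mono (Ex e # nw (\<mu>, \<nu>, j))) (mono (nw ([e], [], j)) :: ('v,'e,'k) fa)"
        using r_er[OF e] True \<open>\<mu> = []\<close> Nil by simp
      ultimately show ?thesis using NF_nw by blast
    next
      case False
      then show ?thesis using z_Ev[OF ep(3) e False] \<open>\<mu> = []\<close> Nil NF_zero by fastforce
    qed
  next
    case (snoc \<nu>0 f)
    let ?R = "map Gx (rev \<nu>0)"
    have f: "f \<in> E1" "r f = j" and R: "set ?R \<subseteq> gens V E1"
      using ep snoc by (auto simp: epath_snoc dest!: epath_E1)
    show ?thesis
    proof (cases "r e = r f")
      case True
      have "([e], \<nu>, j) \<in> T" using ep True e f by (auto simp: T_iff)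
      moreover have "Ex e # nw (\<mu>, \<nu>, j) = nw ([e], \<nu>, j)" using \<open>\<mu> = []\<close> snoc by simp
      ultimately show ?thesis using NF_eq by blast
    next
      case False
      have "cong (mono (Ex e # nw (\<mu>, \<nu>, j))) (fa_zero :: ('v,'e,'k) fa)"
        using ctx_zero[OF z_EG[OF e f(1) False], of "[]" ?R] \<open>\<mu> = []\<close> snoc R by simp
      then show ?thesis using NF_zero by blast
    qed
  qed
qed

lemma prep_G:
  assumes t: "(\<mu>, \<nu>, j) \<in> T" and e: "e \<in> E1"
  shows "NF (Gx e # nw (\<mu>, \<nu>, j)) TYPE('k::field)"
proof (cases \<mu>)
  case (Cons f \<mu>')
  let ?R = "map Ex \<mu>' @ map Gx (rev \<nu>)"
  have ep: "epath \<mu> j" "epath \<nu> j" "j \<in> V" using t by (auto simp: T_iff)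
  have f: "f \<in> E1" and R: "set ?R \<subseteq> gens V E1"
    using ep Cons by (auto dest!: epath_E1)
  show ?thesis
  proof (cases "e = f")
    case True
    have 1: "cong (mono (Gx e # nw (\<mu>, \<nu>, j))) (mono (Vx (r e) # ?R) :: ('v,'e,'k) fa)"
      using ctx_mono[OF r_ge[OF e], of "[]" ?R] Cons True R by simp
    have "NF (Vx (r e) # ?R) TYPE('k)"
    proof (cases \<mu>')
      case (Cons f' \<mu>'')
      have "r e = s f'" "f' \<in> E1" using ep \<open>\<mu> = f # \<mu>'\<close> Cons True by auto
      moreover have "(\<mu>', \<nu>, j) \<in> T" using ep \<open>\<mu> = f # \<mu>'\<close> by (auto simp: T_iff)
      moreover have "set (map Ex \<mu>'' @ map Gx (rev \<nu>)) \<subseteq> gens V E1" using R Cons by auto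
      ultimately have "cong (mono (Vx (r e) # ?R)) (mono (nw (\<mu>', \<nu>, j)) :: ('v,'e,'k) fa)"
        "(\<mu>', \<nu>, j) \<in> T"
        using ctx_mono[OF r_se[of f'], of "[]" "map Ex \<mu>'' @ map Gx (rev \<nu>)"] Cons by auto
      then show ?thesis using NF_nw by blast
    next
      case Nil
      show ?thesis
      proof (cases \<nu> rule: rev_cases)
        case Nil
        have "r e = j" using ep \<open>\<mu> = f # \<mu>'\<close> \<open>\<mu>' = []\<close> True by auto
        then have "Vx (r e) # ?R = nw ([], [], j)" using \<open>\<mu>' = []\<close> Nil by simp
        moreover have "([], [], j) \<in> T" using ep by (auto simp: T_iff)
        ultimately show ?thesis using NF_eq by blast
      next
        case (snoc \<nu>0 f')
        have "r e = r f'" "f' \<in> E1" using ep \<open>\<mu> = f # \<mu>'\<close> \<open>\<mu>' = []\<close> True snoc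
          by (auto simp: epath_snoc)
        moreover have "([], \<nu>, j) \<in> T" using ep by (auto simp: T_iff)
        moreover have "set (map Gx (rev \<nu>0)) \<subseteq> gens V E1" using R snoc by auto
        ultimately have "cong (mono (Vx (r e) # ?R)) (mono (nw ([], \<nu>, j)) :: ('v,'e,'k) fa)"
          "([], \<nu>, j) \<in> T"
          using ctx_mono[OF r_rg[of f'], of "[]" "map Gx (rev \<nu>0)"] \<open>\<mu>' = []\<close> snoc by auto
        then show ?thesis using NF_nw by blast
      qed
    qed
    then show ?thesis unfolding NF_def using 1 cong_trans by blast
  next
    case False
    have "cong (mono (Gx e # nw (\<mu>, \<nu>, j))) (fa_zero :: ('v,'e,'k) fa)"
      using ctx_zero[OF r_ge0[OF e f False], of "[]" ?R] Cons R by simp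
    then show ?thesis using NF_zero by blast
  qed
next
  case Nil
  have ep: "epath \<mu> j" "epath \<nu> j" "j \<in> V" using t by (auto simp: T_iff)
  show ?thesis
  proof (cases \<nu> rule: rev_cases)
    case Nil
    show ?thesis
    proof (cases "s e = j")
      case True
      have "([], [e], r e) \<in> T" using True e ep by (auto simp: T_iff)
      moreover have "cong (mono (Gx e # nw (\<mu>, \<nu>, j))) (mono (nw ([], [e], r e)) :: ('v,'e,'k) fa)"
        using r_gs[OF e] True \<open>\<mu> = []\<close> Nil by (simp add: nw_def)
      ultimately show ?thesis using NF_nw by blast
    next
      case False
      then show ?thesis using z_Gv[OF ep(3) e False] \<open>\<mu> = []\<close> Nil NF_zero by fastforce
    qed
  next
    case (snoc \<nu>0 f)
    let ?R = "map Gx (rev \<nu>0)"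
    have f: "f \<in> E1" "r f = j" and R: "set ?R \<subseteq> gens V E1"
      using ep snoc by (auto simp: epath_snoc dest!: epath_E1)
    show ?thesis
    proof (cases "s e = r f")
      case True
      have "([], \<nu> @ [e], r e) \<in> T" using ep True e f by (auto simp: T_iff epath_snoc)
      moreover have "Gx e # nw (\<mu>, \<nu>, j) = nw ([], \<nu> @ [e], r e)" using \<open>\<mu> = []\<close> snoc
        by (simp only: nw_simps(3)) simp
      ultimately show ?thesis using NF_eq by blast
    next
      case False
      have "cong (mono (Gx e # nw (\<mu>, \<nu>, j))) (fa_zero :: ('v,'e,'k) fa)"
        using ctx_zero[OF z_GG[OF e f(1) False], of "[]" ?R] \<open>\<mu> = []\<close> snoc R by simp
      then show ?thesis using NF_zero by blast
    qed
  qed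
qed

lemma prepend:
  assumes t: "t \<in> T" and g: "g \<in> gens V E1"
  shows "NF (g # nw t) TYPE('k::field)"
proof -
  obtain \<mu> \<nu> j where tt: "t = (\<mu>, \<nu>, j)" by (cases t) auto
  show ?thesis using g t unfolding tt gens_def
    by (auto intro: prep_V prep_E prep_G)
qed

lemma NF_word: "w \<noteq> [] \<Longrightarrow> set w \<subseteq> gens V E1 \<Longrightarrow> NF w TYPE('k::field)"
proof (induction w)
  case Nil
  then show ?case by simp
next
  case (Cons g w)
  show ?case
  proof (cases "w = []")
    case True
    have g: "g \<in> gens V E1" using Cons by simp
    show ?thesis
    proof (cases g)
      case (Vx a)
      then show ?thesis using g True NF_eq[of "([], [], a)"] by (auto simp: T_iff)
    next
      case (Ex e)
      then show ?thesis using g True NF_eq[of "([e], [], r e)"] by (auto simp: T_iff)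
    next
      case (Gx e)
      then show ?thesis using g True NF_eq[of "([], [e], r e)"] by (auto simp: T_iff nw_def)
    qed
  next
    case False
    have g: "g \<in> gens V E1" and w: "set w \<subseteq> gens V E1" using Cons by auto
    have "NF w TYPE('k)" using Cons.IH False w by simp
    then consider "cong (mono w) (fa_zero :: ('v,'e,'k) fa)"
      | t where "t \<in> T" "cong (mono w) (mono (nw t) :: ('v,'e,'k) fa)"
      unfolding NF_def by blast
    then show ?thesis
    proof cases
      case 1
      then show ?thesis using ctx_zero[OF 1, of "[g]" "[]"] g NF_zero by simp
    next
      case 2
      have c: "cong (mono (g # w)) (mono (g # nw t) :: ('v,'e,'k) fa)"
        using ctx_mono[OF 2(2), of "[g]" "[]"] g by simp
      have "NF (g # nw t) TYPE('k)" using prepend[OF 2(1) g] .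
      then show ?thesis unfolding NF_def using c cong_trans by blast
    qed
  qed
qed

definition nsupp :: "('v,'e,'k::field) fa \<Rightarrow> bool" where
  "nsupp q \<longleftrightarrow> (\<forall>w. q w \<noteq> 0 \<longrightarrow> (\<exists>t\<in>T. w = nw t))"

lemma fa_expand:
  assumes "p \<in> fa_elems V E1"
  shows "p = (\<lambda>x. \<Sum>w\<in>{w. p w \<noteq> 0}. p w * mono w x)"
proof
  fix x
  have "(\<Sum>w\<in>{w. p w \<noteq> 0}. p w * mono w x) = (\<Sum>w\<in>{w. p w \<noteq> 0}. if w = x then p x else 0)"
    by (intro sum.cong) (auto simp: mono_def)
  also have "\<dots> = p x" using fa_elemsD(1)[OF assms] by (simp add: sum.delta')
  finally show "p x = (\<Sum>w\<in>{w. p w \<noteq> 0}. p w * mono w x)" by simp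
qed

lemma reduce:
  assumes p: "p \<in> fa_elems V E1"
  shows "\<exists>q. q \<in> fa_elems V E1 \<and> nsupp q \<and> cong p (q :: ('v,'e,'k::field) fa)"
proof -
  define S where "S = {w. p w \<noteq> 0}"
  have S: "finite S" "\<And>w. w \<in> S \<Longrightarrow> w \<noteq> [] \<and> set w \<subseteq> gens V E1"
    using fa_elemsD[OF p] unfolding S_def by auto
  define g :: "('v,'e) gen list \<Rightarrow> ('v,'e,'k) fa" where "g w = (if cong (mono w) (fa_zero :: ('v,'e,'k) fa) then fa_zero
     else mono (nw (SOME t. t \<in> T \<and> cong (mono w) (mono (nw t) :: ('v,'e,'k) fa))))" for w
  have g: "cong (mono w) (g w) \<and> g w \<in> fa_elems V E1 \<and> (\<forall>x. g w x \<noteq> 0 \<longrightarrow> (\<exists>t\<in>T. x = nw t))"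
    if "w \<in> S" for w
  proof (cases "cong (mono w) (fa_zero :: ('v,'e,'k) fa)")
    case True
    then show ?thesis unfolding g_def by (simp add: fa_elems_zero) (simp add: fa_zero_def)
  next
    case False
    have "NF w TYPE('k)" using NF_word S(2)[OF that] by auto
    then have "\<exists>t. t \<in> T \<and> cong (mono w) (mono (nw t) :: ('v,'e,'k) fa)" using False unfolding NF_def by auto
    then obtain t0 where t0: "t0 = (SOME t. t \<in> T \<and> cong (mono w) (mono (nw t) :: ('v,'e,'k) fa))"
      by simp
    have st: "t0 \<in> T \<and> cong (mono w) (mono (nw t0) :: ('v,'e,'k) fa)"
      unfolding t0 by (rule someI_ex) fact
    have gw: "g w = mono (nw t0)" using False unfolding g_def t0 by simp
    have "mono (nw t0) \<in> fa_elems V E1" using st by (intro fa_elems_mono nw_gens) auto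
    then show ?thesis using st unfolding gw by (auto simp: mono_def split: if_splits)
  qed
  define q where "q = (\<lambda>x. \<Sum>w\<in>S. p w * g w x)"
  have "cong (\<lambda>x. \<Sum>w\<in>S. p w * mono w x) q"
    unfolding q_def by (rule cong_sum) (use S g in auto)
  then have "cong p q" using fa_expand[OF p] unfolding S_def by simp
  moreover have "q \<in> fa_elems V E1" unfolding q_def by (rule fa_elems_sum) (use S g in auto)
  moreover have "nsupp q"
    unfolding nsupp_def q_def
  proof (intro allI impI)
    fix x assume "(\<Sum>w\<in>S. p w * g w x) \<noteq> 0"
    then obtain w where "w \<in> S" "p w * g w x \<noteq> 0" by (meson sum.not_neutral_contains_not_neutral)
    then show "\<exists>t\<in>T. x = nw t" using g by auto
  qed
  ultimately show ?thesis by blast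
qed

end


datatype ('v, 'e) bp = BF 'v "'e list" | BI "nat \<Rightarrow> 'e"

fun bcons :: "'e \<Rightarrow> ('v, 'e) bp \<Rightarrow> ('v, 'e) bp" where
  "bcons e (BF v es) = BF v (e # es)"
| "bcons e (BI f) = BI (case_nat e f)"

lemma bcons_inj [simp]: "bcons e b = bcons e' b' \<longleftrightarrow> e = e' \<and> b = b'"
proof
  assume h: "bcons e b = bcons e' b'"
  show "e = e' \<and> b = b'"
  proof (cases b; cases b')
    fix f g assume "b = BI f" "b' = BI g"
    then have "case_nat e f = case_nat e' g" using h by simp
    then have "e = e'" "\<And>n. f n = g n" by (metis old.nat.simps(4), metis old.nat.simps(5))
    then show ?thesis using \<open>b = BI f\<close> \<open>b' = BI g\<close> by auto
  qed (use h in auto)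
qed auto

fun bpre :: "'e list \<Rightarrow> ('v, 'e) bp \<Rightarrow> ('v, 'e) bp" where
  "bpre [] b = b"
| "bpre (e # es) b = bcons e (bpre es b)"

lemma bpre_eq:
  "bpre \<nu> q = bpre \<nu>' z \<Longrightarrow> length \<nu> \<le> length \<nu>' \<Longrightarrow> \<exists>\<delta>. \<nu>' = \<nu> @ \<delta> \<and> q = bpre \<delta> z"
proof (induction \<nu> arbitrary: \<nu>')
  case Nil
  then show ?case by simp
next
  case (Cons e \<nu>)
  then obtain e' \<nu>'' where "\<nu>' = e' # \<nu>''" by (cases \<nu>') auto
  with Cons show ?case by auto
qed

lemma bpre_BF_nil: "bpre \<delta> z = BF j [] \<Longrightarrow> \<delta> = []"
  by (cases \<delta>; cases "bpre (tl \<delta>) z") auto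

lemma bpre_inj_len: "bpre \<mu>' q = bpre \<mu> q \<Longrightarrow> length \<mu>' = length \<mu> \<Longrightarrow> \<mu>' = \<mu>"
  using bpre_eq[of \<mu>' q \<mu> q] by auto

context lg
begin

fun src :: "('v, 'e) bp \<Rightarrow> 'v" where
  "src (BF v []) = v"
| "src (BF v (e # es)) = s e"
| "src (BI f) = s (f 0)"

lemma src_bcons [simp]: "src (bcons e b) = s e"
  by (cases b) auto

fun valid :: "('v, 'e) bp \<Rightarrow> bool" where
  "valid (BF v es) = (v \<in> V \<and> \<not> regular E1 s v \<and> epath es v)"
| "valid (BI f) = (\<forall>i. f i \<in> E1 \<and> r (f i) = s (f (Suc i)))"

fun uncons :: "'e \<Rightarrow> ('v, 'e) bp \<Rightarrow> ('v, 'e) bp option" where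
  "uncons e (BF v []) = None"
| "uncons e (BF v (f # es)) = (if f = e \<and> r e = src (BF v es) then Some (BF v es) else None)"
| "uncons e (BI f) = (if f 0 = e \<and> r e = s (f 1) then Some (BI (\<lambda>n. f (Suc n))) else None)"

lemma uncons_iff: "uncons e c = Some b \<longleftrightarrow> c = bcons e b \<and> r e = src b"
proof (cases c)
  case (BF v es)
  then show ?thesis by (cases es; cases b) auto
next
  case (BI g)
  show ?thesis
  proof
    assume "uncons e c = Some b"
    then have "g 0 = e" "r e = s (g 1)" "b = BI (\<lambda>n. g (Suc n))" using BI by (auto split: if_splits)
    moreover have "case_nat (g 0) (\<lambda>n. g (Suc n)) = g" by (rule ext) (simp split: nat.splits)
    ultimately show "c = bcons e b \<and> r e = src b" using BI by auto
  next
    assume "c = bcons e b \<and> r e = src b"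
    then show "uncons e c = Some b" using BI by (cases b) auto
  qed
qed

lemma uncons_bcons [simp]: "r e = src b \<Longrightarrow> uncons e (bcons e b) = Some b"
  by (simp add: uncons_iff)

lemma valid_BI_tail: "valid (BI (case_nat e f)) \<Longrightarrow> valid (BI f)"
proof -
  assume h: "valid (BI (case_nat e f))"
  show ?thesis
  proof (simp, intro allI conjI)
    fix i
    from h have "case_nat e f (Suc i) \<in> E1 \<and> r (case_nat e f (Suc i)) = s (case_nat e f (Suc (Suc i)))"
      unfolding valid.simps by blast
    then show "f i \<in> E1" "r (f i) = s (f (Suc i))" by simp_all
  qed
qed

fun act1 :: "('v, 'e) gen \<Rightarrow> ('v, 'e) bp \<times> int \<Rightarrow> (('v, 'e) bp \<times> int) option" where
  "act1 (Vx a) (b, n) = (if a \<in> V \<and> src b = a then Some (b, n) else None)"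
| "act1 (Ex e) (b, n) = (if e \<in> E1 \<and> r e = src b then Some (bcons e b, n + 1) else None)"
| "act1 (Gx e) (b, n) = (if e \<in> E1 then (case uncons e b of None \<Rightarrow> None | Some b' \<Rightarrow> Some (b', n - 1)) else None)"

lemma act1_star: "act1 (gstar g) y = Some x \<longleftrightarrow> act1 g x = Some y"
proof (cases g)
  case (Vx a)
  then show ?thesis by (cases x; cases y) auto
next
  case (Ex e)
  obtain b n c m where xy: "x = (b, n)" "y = (c, m)" by (cases x; cases y) auto
  show ?thesis using Ex xy by (auto simp: uncons_iff split: option.splits)
next
  case (Gx e)
  obtain b n c m where xy: "x = (b, n)" "y = (c, m)" by (cases x; cases y) auto
  show ?thesis using Gx xy by (auto simp: uncons_iff split: option.splits)
qed

fun actw :: "('v, 'e) gen list \<Rightarrow> ('v, 'e) bp \<times> int \<Rightarrow> (('v, 'e) bp \<times> int) option" where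
  "actw [] x = Some x"
| "actw (g # w) x = Option.bind (actw w x) (act1 g)"

lemma actw_append: "actw (u @ v) x = Option.bind (actw v x) (actw u)"
  by (induction u) (auto simp: bind_assoc)

lemma actw_single [simp]: "actw [g] x = act1 g x"
  by simp

lemma actw_star: "actw (map gstar (rev w)) y = Some x \<longleftrightarrow> actw w x = Some y"
proof (induction w arbitrary: x y)
  case Nil
  then show ?case by auto
next
  case (Cons g w)
  have "actw (map gstar (rev (g # w))) y = Option.bind (act1 (gstar g) y) (actw (map gstar (rev w)))"
    by (simp add: actw_append)
  then show ?case using Cons act1_star by (auto simp: bind_eq_Some_conv)
qed

definition valid_st :: "('v, 'e) bp \<times> int \<Rightarrow> bool" where
  "valid_st x \<longleftrightarrow> valid (fst x)"

lemma src_in: "valid b \<Longrightarrow> src b \<in> V"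
proof (cases b)
  case (BF v es)
  assume "valid b"
  then show ?thesis using BF by (cases es) auto
qed auto

lemma valid_BI_cons: "valid (BI f) \<Longrightarrow> e \<in> E1 \<Longrightarrow> r e = s (f 0) \<Longrightarrow> valid (BI (case_nat e f))"
proof -
  assume h: "valid (BI f)" "e \<in> E1" "r e = s (f 0)"
  show ?thesis unfolding valid.simps
  proof
    fix i show "case_nat e f i \<in> E1 \<and> r (case_nat e f i) = s (case_nat e f (Suc i))"
      using h by (cases i) auto
  qed
qed

lemma valid_bcons: "valid b \<Longrightarrow> e \<in> E1 \<Longrightarrow> r e = src b \<Longrightarrow> valid (bcons e b)"
proof (cases b)
  case (BF v es)
  assume h: "valid b" "e \<in> E1" "r e = src b"
  show ?thesis
  proof (cases es)
    case Nil
    then show ?thesis using h BF by simp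
  next
    case (Cons f fs)
    then show ?thesis using h BF by simp
  qed
next
  case (BI f)
  assume "valid b" "e \<in> E1" "r e = src b"
  then have "valid (BI f)" "e \<in> E1" "r e = s (f 0)" using BI by auto
  then have "valid (BI (case_nat e f))" by (rule valid_BI_cons)
  then show ?thesis using BI by simp
qed

lemma valid_bcons_tail: "valid (bcons e b) \<Longrightarrow> r e = src b \<Longrightarrow> valid b"
proof (cases b)
  case (BF v es)
  assume h: "valid (bcons e b)" "r e = src b"
  show ?thesis
  proof (cases es)
    case Nil
    then show ?thesis using h BF by simp
  next
    case (Cons f fs)
    then show ?thesis using h BF by simp
  qed
next
  case (BI f)
  assume "valid (bcons e b)" "r e = src b"
  then have "valid (BI (case_nat e f))" using BI by simp
  then have "valid (BI f)" by (rule valid_BI_tail)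
  then show ?thesis using BI by simp
qed

lemma act1_valid: "valid_st x \<Longrightarrow> act1 g x = Some y \<Longrightarrow> valid_st y"
proof -
  assume v: "valid_st x" and a: "act1 g x = Some y"
  obtain b n where x: "x = (b, n)" by (cases x) auto
  show ?thesis
  proof (cases g)
    case (Vx a')
    then show ?thesis using v a x by (auto split: if_splits)
  next
    case (Ex e)
    then have y: "y = (bcons e b, n + 1)" "e \<in> E1" "r e = src b" using a x by (auto split: if_splits)
    then show ?thesis using v x valid_bcons unfolding valid_st_def by simp
  next
    case (Gx e)
    then obtain b' where y: "y = (b', n - 1)" "uncons e b = Some b'" using a x
      by (auto split: if_splits option.splits)
    then have "b = bcons e b'" "r e = src b'" by (auto simp: uncons_iff)
    then show ?thesis using v x y valid_bcons_tail unfolding valid_st_def by simp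
  qed
qed

lemma actw_valid: "valid_st x \<Longrightarrow> actw w x = Some y \<Longrightarrow> valid_st y"
proof (induction w arbitrary: y)
  case (Cons g w)
  then obtain z where "actw w x = Some z" "act1 g z = Some y" by (auto simp: bind_eq_Some_conv)
  then show ?case using Cons.IH Cons.prems(1) act1_valid by blast
qed auto

end


context lg
begin

definition Psi :: "('v,'e,'k::field) fa \<Rightarrow> ('v,'e) bp \<times> int \<Rightarrow> ('v,'e) bp \<times> int \<Rightarrow> 'k" where
  "Psi p x y = (\<Sum>w\<in>{w. p w \<noteq> 0}. p w * (if actw w x = Some y then 1 else 0))"

lemma Psi_sup:
  assumes "finite W" "{w. p w \<noteq> 0} \<subseteq> W"
  shows "Psi p x y = (\<Sum>w\<in>W. p w * (if actw w x = Some y then 1 else 0))"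
  unfolding Psi_def by (rule sum.mono_neutral_left) (use assms in auto)

lemma Psi_mono: "Psi (mono w :: ('v,'e,'k::field) fa) x y = (if actw w x = Some y then 1 else 0)"
proof -
  have "Psi (mono w :: ('v,'e,'k) fa) x y = (\<Sum>w'\<in>{w}. mono w w' * (if actw w' x = Some y then 1 else 0))"
    by (rule Psi_sup) (auto simp: mono_def split: if_splits)
  then show ?thesis by (simp add: mono_def)
qed

lemma Psi_zero: "Psi (fa_zero :: ('v,'e,'k::field) fa) x y = 0"
  unfolding Psi_def fa_zero_def by simp

lemma Psi_add:
  assumes "finite {w. p w \<noteq> 0}" "finite {w. q w \<noteq> 0}"
  shows "Psi (fa_add p q :: ('v,'e,'k::field) fa) x y = Psi p x y + Psi q x y"
proof -
  let ?W = "{w. p w \<noteq> 0} \<union> {w. q w \<noteq> 0}"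
  have "Psi (fa_add p q) x y = (\<Sum>w\<in>?W. fa_add p q w * (if actw w x = Some y then 1 else 0))"
    by (rule Psi_sup) (use assms in \<open>auto simp: fa_add_def\<close>)
  moreover have "Psi p x y = (\<Sum>w\<in>?W. p w * (if actw w x = Some y then 1 else 0))"
    by (rule Psi_sup) (use assms in auto)
  moreover have "Psi q x y = (\<Sum>w\<in>?W. q w * (if actw w x = Some y then 1 else 0))"
    by (rule Psi_sup) (use assms in auto)
  ultimately show ?thesis by (simp add: fa_add_def sum.distrib distrib_right)
qed

lemma Psi_diff:
  assumes "finite {w. p w \<noteq> 0}" "finite {w. q w \<noteq> 0}"
  shows "Psi (fa_diff p q :: ('v,'e,'k::field) fa) x y = Psi p x y - Psi q x y"
proof -
  let ?W = "{w. p w \<noteq> 0} \<union> {w. q w \<noteq> 0}"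
  have "Psi (fa_diff p q) x y = (\<Sum>w\<in>?W. fa_diff p q w * (if actw w x = Some y then 1 else 0))"
    by (rule Psi_sup) (use assms in \<open>auto simp: fa_diff_def\<close>)
  moreover have "Psi p x y = (\<Sum>w\<in>?W. p w * (if actw w x = Some y then 1 else 0))"
    by (rule Psi_sup) (use assms in auto)
  moreover have "Psi q x y = (\<Sum>w\<in>?W. q w * (if actw w x = Some y then 1 else 0))"
    by (rule Psi_sup) (use assms in auto)
  ultimately show ?thesis by (simp add: fa_diff_def sum_subtractf left_diff_distrib)
qed

lemma Psi_smult:
  assumes "finite {w. p w \<noteq> 0}"
  shows "Psi (fa_smult c p :: ('v,'e,'k::field) fa) x y = c * Psi p x y"
proof -
  have "Psi (fa_smult c p) x y = (\<Sum>w\<in>{w. p w \<noteq> 0}. fa_smult c p w * (if actw w x = Some y then 1 else 0))"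
    by (rule Psi_sup) (use assms in \<open>auto simp: fa_smult_def\<close>)
  then show ?thesis by (simp add: Psi_def fa_smult_def sum_distrib_left mult_ac)
qed

lemma Psi_sum:
  assumes "finite F" "\<And>i. i \<in> F \<Longrightarrow> finite {w. f i w \<noteq> 0}"
  shows "Psi (\<lambda>w. \<Sum>i\<in>F. f i w :: 'k::field) x y = (\<Sum>i\<in>F. Psi (f i) x y)"
proof -
  let ?W = "\<Union>i\<in>F. {w. f i w \<noteq> 0}"
  have W: "finite ?W" using assms by auto
  have "Psi (\<lambda>w. \<Sum>i\<in>F. f i w) x y = (\<Sum>w\<in>?W. (\<Sum>i\<in>F. f i w) * (if actw w x = Some y then 1 else 0))"
    by (rule Psi_sup[OF W]) (auto dest: sum.not_neutral_contains_not_neutral)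
  also have "\<dots> = (\<Sum>i\<in>F. \<Sum>w\<in>?W. f i w * (if actw w x = Some y then 1 else 0))"
    by (simp add: sum_distrib_right sum.swap[where A=F])
  also have "\<dots> = (\<Sum>i\<in>F. Psi (f i) x y)"
    by (intro sum.cong refl Psi_sup[symmetric] W) auto
  finally show ?thesis .
qed

lemma Psi_mult:
  fixes p q :: "('v,'e,'k::field) fa"
  assumes fp: "finite {w. p w \<noteq> 0}" and fq: "finite {w. q w \<noteq> 0}"
    and D: "finite D" "\<And>v d. q v \<noteq> 0 \<Longrightarrow> actw v x = Some d \<Longrightarrow> d \<in> D"
  shows "Psi (fa_mult p q) x y = (\<Sum>d\<in>D. Psi q x d * Psi p d y)"
proof -
  define Sp where "Sp = {w. p w \<noteq> 0}"
  define Sq where "Sq = {w. q w \<noteq> 0}"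
  define cat where "cat = (\<lambda>(u::('v,'e) gen list, v::('v,'e) gen list). u @ v)"
  define W where "W = cat ` (Sp \<times> Sq)"
  have fin: "finite Sp" "finite Sq" "finite W" using fp fq unfolding Sp_def Sq_def W_def by auto
  define ind where "ind w z z' = (if actw w z = Some z' then 1 else (0::'k))" for w z z'
  have m: "fa_mult p q w = (\<Sum>z\<in>{z \<in> Sp \<times> Sq. cat z = w}. (case z of (u, v) \<Rightarrow> p u * q v))" for w
    unfolding fa_mult_def
    by (rule sum.mono_neutral_cong_right) (auto simp: split_finite Sp_def Sq_def cat_def)
  have "{w. fa_mult p q w \<noteq> 0} \<subseteq> W"
    using fa_mult_nz unfolding W_def Sp_def Sq_def cat_def by fastforce
  then have "Psi (fa_mult p q) x y = (\<Sum>w\<in>W. fa_mult p q w * ind w x y)"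
    unfolding ind_def by (rule Psi_sup[OF fin(3)])
  also have "\<dots> = (\<Sum>w\<in>W. \<Sum>z\<in>{z \<in> Sp \<times> Sq. cat z = w}. (case z of (u, v) \<Rightarrow> p u * q v) * ind (cat z) x y)"
    unfolding m by (simp add: sum_distrib_right)
  also have "\<dots> = (\<Sum>z\<in>Sp \<times> Sq. (case z of (u, v) \<Rightarrow> p u * q v) * ind (cat z) x y)"
    by (rule sum.group) (use fin in \<open>auto simp: W_def\<close>)
  also have "\<dots> = (\<Sum>u\<in>Sp. \<Sum>v\<in>Sq. p u * q v * ind (u @ v) x y)"
    by (simp add: sum.cartesian_product cat_def split_def)
  also have "\<dots> = (\<Sum>u\<in>Sp. \<Sum>v\<in>Sq. \<Sum>d\<in>D. p u * q v * (ind v x d * ind u d y))"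
  proof (intro sum.cong refl)
    fix u v assume v: "v \<in> Sq"
    show "p u * q v * ind (u @ v) x y = (\<Sum>d\<in>D. p u * q v * (ind v x d * ind u d y))"
    proof (cases "actw v x")
      case None
      then show ?thesis by (simp add: ind_def actw_append)
    next
      case (Some d0)
      have d0: "d0 \<in> D" using D(2)[OF _ Some] v unfolding Sq_def by auto
      have "(\<Sum>d\<in>D. p u * q v * (ind v x d * ind u d y)) = (\<Sum>d\<in>D. if d = d0 then p u * q v * ind u d0 y else 0)"
        by (intro sum.cong refl) (auto simp: ind_def Some)
      also have "\<dots> = p u * q v * ind u d0 y" using d0 D(1) by (simp add: sum.delta')
      finally show ?thesis by (simp add: ind_def actw_append Some)
    qed
  qed
  also have "\<dots> = (\<Sum>d\<in>D. (\<Sum>v\<in>Sq. q v * ind v x d) * (\<Sum>u\<in>Sp. p u * ind u d y))"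
    by (simp add: sum_distrib_left sum_distrib_right mult_ac sum.swap[where B=D] sum.swap[where A=Sp])
  also have "\<dots> = (\<Sum>d\<in>D. Psi q x d * Psi p d y)"
    unfolding Psi_def ind_def Sp_def Sq_def by simp
  finally show ?thesis .
qed

lemma Psi_mult_D:
  assumes "finite {w. q w \<noteq> 0}"
  shows "\<exists>D. finite D \<and> (\<forall>v d. q v \<noteq> 0 \<longrightarrow> actw v x = Some d \<longrightarrow> d \<in> D) \<and> (\<forall>d\<in>D. \<exists>v. actw v x = Some d)"
proof -
  define D where "D = (\<lambda>v. the (actw v x)) ` {v. q v \<noteq> 0 \<and> actw v x \<noteq> None}"
  have "finite D" unfolding D_def using assms by auto
  moreover have "\<forall>v d. q v \<noteq> 0 \<longrightarrow> actw v x = Some d \<longrightarrow> d \<in> D"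
  proof (intro allI impI)
    fix v d assume "q v \<noteq> 0" "actw v x = Some d"
    then show "d \<in> D" unfolding D_def by (intro image_eqI[where x=v]) auto
  qed
  moreover have "\<forall>d\<in>D. \<exists>v. actw v x = Some d" unfolding D_def by auto
  ultimately show ?thesis by blast
qed

end


context lg
begin

lemma first_edge:
  assumes "valid b" "regular E1 s (src b)"
  shows "\<exists>e b'. b = bcons e b' \<and> r e = src b' \<and> e \<in> E1"
proof (cases b)
  case (BF v es)
  show ?thesis
  proof (cases es)
    case Nil
    then show ?thesis using assms BF by simp
  next
    case (Cons e es')
    then have "b = bcons e (BF v es')" "r e = src (BF v es')" "e \<in> E1"
      using assms BF by (cases es', auto)+
    then show ?thesis by blast
  qed
next
  case (BI f)
  have "case_nat (f 0) (\<lambda>n. f (Suc n)) = f" by (rule ext) (simp split: nat.splits)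
  then have "b = bcons (f 0) (BI (\<lambda>n. f (Suc n)))" using BI by simp
  moreover have "r (f 0) = src (BI (\<lambda>n. f (Suc n)))" "f 0 \<in> E1" using assms BI by auto
  ultimately show ?thesis by blast
qed

lemma fin_mono: "finite {w'. (mono w :: ('v,'e,'k::field) fa) w' \<noteq> 0}"
  by (rule finite_subset[of _ "{w}"]) (auto simp: mono_def)

lemma fin_zero: "finite {w'. (fa_zero :: ('v,'e,'k::field) fa) w' \<noteq> 0}"
  by (simp add: fa_zero_def)

lemma Psi_pair:
  "Psi (fa_diff (mono a) (mono b) :: ('v,'e,'k::field) fa) z y =
    (if actw a z = Some y then 1 else 0) - (if actw b z = Some y then 1 else 0)"
  by (simp add: Psi_diff fin_mono Psi_mono)

lemma Psi_pair0:
  "Psi (fa_diff (mono a) fa_zero :: ('v,'e,'k::field) fa) z y = (if actw a z = Some y then 1 else 0)"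
  by (simp add: Psi_diff fin_mono fin_zero Psi_mono Psi_zero)

lemma Psi_ck:
  assumes h: "v \<in> V" "regular E1 s v" and vb: "valid b"
  shows "Psi (fa_diff (mono [Vx v]) (\<lambda>w. \<Sum>e\<in>{e \<in> E1. s e = v}. mono [Ex e, Gx e] w) :: ('v,'e,'k::field) fa) (b, n) y = 0"
proof -
  let ?F = "{e \<in> E1. s e = v}"
  let ?z = "(b, n)"
  have fF: "finite ?F" using h(2) by (simp add: regular_def)
  have fs: "finite {w. (\<lambda>w. \<Sum>e\<in>?F. (mono [Ex e, Gx e] :: ('v,'e,'k) fa) w) w \<noteq> 0}"
  proof (rule finite_subset[of _ "(\<lambda>e. [Ex e, Gx e]) ` ?F"])
    show "{w. (\<Sum>e\<in>?F. (mono [Ex e, Gx e] :: ('v,'e,'k) fa) w) \<noteq> 0} \<subseteq> (\<lambda>e. [Ex e, Gx e]) ` ?F"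
    proof
      fix w assume "w \<in> {w. (\<Sum>e\<in>?F. (mono [Ex e, Gx e] :: ('v,'e,'k) fa) w) \<noteq> 0}"
      then obtain e where "e \<in> ?F" "(mono [Ex e, Gx e] :: ('v,'e,'k) fa) w \<noteq> 0"
        by (auto dest: sum.not_neutral_contains_not_neutral)
      then show "w \<in> (\<lambda>e. [Ex e, Gx e]) ` ?F" by (auto simp: mono_def split: if_splits)
    qed
  qed (use fF in simp)
  have ck: "actw [Ex e, Gx e] ?z = (if e \<in> E1 \<and> uncons e b \<noteq> None then Some ?z else None)" for e
  proof (cases "uncons e b")
    case None
    then show ?thesis by simp
  next
    case (Some b')
    then have "b = bcons e b'" "r e = src b'" by (simp_all add: uncons_iff)
    then show ?thesis using Some by simp
  qed
  have sumF: "Psi (\<lambda>w. \<Sum>e\<in>?F. (mono [Ex e, Gx e] :: ('v,'e,'k) fa) w) ?z y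
        = (\<Sum>e\<in>?F. if uncons e b \<noteq> None \<and> ?z = y then 1 else 0)"
    by (subst Psi_sum[OF fF fin_mono]) (rule sum.cong, simp, simp only: Psi_mono ck, auto)
  have "(\<Sum>e\<in>?F. if uncons e b \<noteq> None \<and> ?z = y then 1 else (0::'k)) = (if src b = v \<and> ?z = y then 1 else 0)"
  proof (cases "src b = v")
    case True
    then obtain e0 b0 where e0: "b = bcons e0 b0" "r e0 = src b0" "e0 \<in> E1"
      using first_edge[OF vb] h(2) by auto
    have se0: "s e0 = v" using True e0(1) by simp
    have un: "uncons e b \<noteq> None \<longleftrightarrow> e = e0" for e
    proof
      assume "uncons e b \<noteq> None"
      then obtain b' where "uncons e b = Some b'" by auto
      then have "b = bcons e b'" by (simp add: uncons_iff)
      then show "e = e0" using e0(1) by simp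
    next
      assume "e = e0"
      then show "uncons e b \<noteq> None" using e0 by simp
    qed
    have "(\<Sum>e\<in>?F. if uncons e b \<noteq> None \<and> ?z = y then 1 else (0::'k)) = (\<Sum>e\<in>?F. if e = e0 then (if ?z = y then 1 else 0) else 0)"
      by (intro sum.cong refl) (simp only: un, simp)
    also have "\<dots> = (if ?z = y then 1 else 0)" using fF se0 e0(3) by (simp add: sum.delta')
    finally show ?thesis using True by simp
  next
    case False
    have un: "e \<in> ?F \<Longrightarrow> uncons e b = None" for e
    proof (rule ccontr)
      assume "e \<in> ?F" "uncons e b \<noteq> None"
      then obtain b' where "uncons e b = Some b'" by auto
      then have "b = bcons e b'" by (simp add: uncons_iff)
      then show False using False \<open>e \<in> ?F\<close> by simp
    qed
    have "(\<Sum>e\<in>?F. if uncons e b \<noteq> None \<and> ?z = y then 1 else (0::'k)) = (\<Sum>e\<in>?F. 0)"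
      by (intro sum.cong refl) (simp add: un)
    then show ?thesis using False by simp
  qed
  moreover have "Psi (mono [Vx v] :: ('v,'e,'k) fa) ?z y = (if src b = v \<and> ?z = y then 1 else 0)"
    using h(1) by (simp add: Psi_mono)
  ultimately show ?thesis using sumF fs by (simp add: Psi_diff fin_mono)
qed

lemma Psi_rels:
  assumes x: "x \<in> lpa_rels V E1 s r" and z: "valid_st z"
  shows "Psi (x :: ('v,'e,'k::field) fa) z y = 0"
proof -
  obtain b n where zz: "z = (b, n)" by (cases z) auto
  have vb: "valid b" using z zz by (simp add: valid_st_def)
  from x show ?thesis unfolding lpa_rels_def
  proof (elim UnE CollectE exE conjE)
    fix v w assume h: "x = fa_diff (mono [Vx v, Vx w]) (if v = w then mono [Vx v] else fa_zero)" "v \<in> V" "w \<in> V"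
    show ?thesis
    proof (cases "v = w")
      case True then show ?thesis using h by (cases y) (auto simp: Psi_pair zz)
    next
      case False then show ?thesis using h by (simp add: Psi_pair0 zz)
    qed
  next
    fix e assume h: "x = fa_diff (mono [Vx (s e), Ex e]) (mono [Ex e])" "e \<in> E1"
    then show ?thesis by (cases y) (auto simp: Psi_pair zz)
  next
    fix e assume h: "x = fa_diff (mono [Ex e, Vx (r e)]) (mono [Ex e])" "e \<in> E1"
    then show ?thesis by (cases y) (auto simp: Psi_pair zz)
  next
    fix e assume h: "x = fa_diff (mono [Vx (r e), Gx e]) (mono [Gx e])" "e \<in> E1"
    then show ?thesis by (cases y) (auto simp: Psi_pair zz uncons_iff split: option.splits)
  next
    fix e assume h: "x = fa_diff (mono [Gx e, Vx (s e)]) (mono [Gx e])" "e \<in> E1"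
    then show ?thesis by (cases y) (auto simp: Psi_pair zz uncons_iff split: option.splits)
  next
    fix e f assume h: "x = fa_diff (mono [Gx e, Ex f]) (if e = f then mono [Vx (r e)] else fa_zero)" "e \<in> E1" "f \<in> E1"
    show ?thesis
    proof (cases "e = f")
      case True then show ?thesis using h by (cases y) (auto simp: Psi_pair zz)
    next
      case False then show ?thesis using h by (cases y) (auto simp: Psi_pair0 zz uncons_iff split: option.splits)
    qed
  next
    fix v assume h: "x = fa_diff (mono [Vx v]) (\<lambda>w. \<Sum>e\<in>{e \<in> E1. s e = v}. mono [Ex e, Gx e] w)"
      "v \<in> V" "regular E1 s v"
    then show ?thesis using Psi_ck[OF h(2,3) vb] by (simp add: zz)
  qed
qed

lemma Psi_kernel:
  assumes "p \<in> lpa_ideal V E1 s r" "valid_st z"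
  shows "Psi (p :: ('v,'e,'k::field) fa) z y = 0"
  using assms
proof (induction p arbitrary: z y rule: lpa_ideal.induct)
  case zero
  then show ?case by (simp add: Psi_zero)
next
  case (rel x)
  then show ?case using Psi_rels by blast
next
  case (add x y')
  have "finite {w. x w \<noteq> 0}" "finite {w. y' w \<noteq> 0}"
    using ideal_elems[OF add.hyps(1)] ideal_elems[OF add.hyps(2)] by (auto dest: fa_elemsD(1))
  then have "Psi (fa_add x y') z y = Psi x z y + Psi y' z y" by (rule Psi_add)
  then show ?case using add.IH add.prems by simp
next
  case (smult x c)
  have "finite {w. x w \<noteq> 0}" using ideal_elems[OF smult.hyps(1)] by (auto dest: fa_elemsD(1))
  then have "Psi (fa_smult c x) z y = c * Psi x z y" by (rule Psi_smult)
  then show ?case using smult.IH smult.prems by simp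
next
  case (left x p)
  have fx: "finite {w. x w \<noteq> 0}" using ideal_elems[OF left.hyps(1)] by (rule fa_elemsD)
  have fp: "finite {w. p w \<noteq> 0}" using left.hyps(2) by (rule fa_elemsD)
  obtain D where D: "finite D" "\<And>v d. x v \<noteq> 0 \<Longrightarrow> actw v z = Some d \<Longrightarrow> d \<in> D"
  proof -
    from Psi_mult_D[OF fx, of z] obtain D where "finite D" "\<forall>v d. x v \<noteq> 0 \<longrightarrow> actw v z = Some d \<longrightarrow> d \<in> D"
      by blast
    then show ?thesis using that by blast
  qed
  have "Psi (fa_mult p x) z y = (\<Sum>d\<in>D. Psi x z d * Psi p d y)"
    by (rule Psi_mult[OF fp fx D(1) D(2)])
  also have "\<dots> = (\<Sum>d\<in>D. 0)"
    by (intro sum.cong refl) (simp add: left.IH[OF left.prems])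
  finally show ?case by simp
next
  case (right x p)
  have fx: "finite {w. x w \<noteq> 0}" using ideal_elems[OF right.hyps(1)] by (rule fa_elemsD)
  have fp: "finite {w. p w \<noteq> 0}" using right.hyps(2) by (rule fa_elemsD)
  obtain D where D: "finite D" "\<And>v d. p v \<noteq> 0 \<Longrightarrow> actw v z = Some d \<Longrightarrow> d \<in> D"
    "\<And>d. d \<in> D \<Longrightarrow> \<exists>v. actw v z = Some d"
  proof -
    from Psi_mult_D[OF fp, of z] obtain D where "finite D" "\<forall>v d. p v \<noteq> 0 \<longrightarrow> actw v z = Some d \<longrightarrow> d \<in> D"
      "\<forall>d\<in>D. \<exists>v. actw v z = Some d"
      by blast
    then show ?thesis using that by blast
  qed
  have "Psi (fa_mult x p) z y = (\<Sum>d\<in>D. Psi p z d * Psi x d y)"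
    by (rule Psi_mult[OF fx fp D(1) D(2)])
  also have "\<dots> = (\<Sum>d\<in>D. 0)"
  proof (intro sum.cong refl)
    fix d assume "d \<in> D"
    then obtain v where "actw v z = Some d" using D(3) by blast
    then have "valid_st d" using actw_valid right.prems by blast
    then show "Psi p z d * Psi x d y = 0" using right.IH by simp
  qed
  finally show ?case by simp
qed

end


lemma inv_zero: "field_involution cj \<Longrightarrow> cj 0 = 0"
proof -
  assume h: "field_involution cj"
  have "cj (0 + 0) = cj 0 + cj 0" using h unfolding field_involution_def by blast
  then have "cj 0 + 0 = cj 0 + cj 0" by simp
  then show ?thesis by (metis add_left_cancel)
qed

lemma inv_one: "field_involution cj \<Longrightarrow> cj 1 = 1"
proof -
  assume h: "field_involution cj"
  have m: "cj (1 * 1) = cj 1 * cj 1" using h unfolding field_involution_def by blast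
  have ii: "cj (cj 1) = 1" using h unfolding field_involution_def by blast
  show ?thesis
  proof (rule ccontr)
    assume "cj 1 \<noteq> 1"
    moreover have "cj 1 * (cj 1 - 1) = 0" using m by (simp add: algebra_simps)
    ultimately have "cj 1 = 0" by simp
    then show False using ii inv_zero[OF h] by simp
  qed
qed

lemma inv_mult: "field_involution cj \<Longrightarrow> cj (a * b) = cj a * cj b"
  unfolding field_involution_def by blast

lemma inv_inv: "field_involution cj \<Longrightarrow> cj (cj a) = a"
  unfolding field_involution_def by blast

lemma inv_sum: "field_involution cj \<Longrightarrow> cj (\<Sum>i\<in>F. f i) = (\<Sum>i\<in>F. cj (f i))"
proof (induction F rule: infinite_finite_induct)
  case (infinite A)
  then show ?case using inv_zero by simp
next
  case empty
  then show ?case using inv_zero by simp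
next
  case (insert x F)
  then show ?case unfolding field_involution_def by simp
qed

lemma inv_eq0: "field_involution cj \<Longrightarrow> cj a = 0 \<longleftrightarrow> a = 0"
proof -
  assume h: "field_involution cj"
  show ?thesis
  proof
    assume "cj a = 0"
    then have "cj (cj a) = cj 0" by simp
    then show "a = 0" using inv_inv[OF h] inv_zero[OF h] by simp
  qed (simp add: inv_zero[OF h])
qed

lemma gstar_gstar [simp]: "gstar (gstar g) = g"
  by (cases g) auto

lemma star_star [simp]: "map gstar (rev (map gstar (rev w))) = w"
  by (simp add: rev_map comp_def)

lemma pos_def_set:
  assumes pd: "pos_def_field cj" and A: "finite A" and z: "(\<Sum>a\<in>A. f a * cj (f a)) = 0" and a: "a \<in> A"
  shows "f a = 0"
proof -
  obtain h where h: "bij_betw h {0..<card A} A" using ex_bij_betw_nat_finite[OF A] by blast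
  have "(\<Sum>a\<in>A. f a * cj (f a)) = (\<Sum>i\<in>{0..<card A}. f (h i) * cj (f (h i)))"
    using sum.reindex_bij_betw[OF h, of "\<lambda>a. f a * cj (f a)"] by simp
  then have "(\<Sum>i<card A. f (h i) * cj (f (h i))) = 0" using z by (simp add: atLeast0LessThan)
  then have "\<forall>i<card A. f (h i) = 0" using pd unfolding pos_def_field_def
    by (elim allE[of _ "card A"] allE[of _ "\<lambda>i. f (h i)"]) simp
  moreover obtain i where "i < card A" "h i = a"
  proof -
    have "a \<in> h ` {0..<card A}" using h a unfolding bij_betw_def by simp
    then obtain i where "i \<in> {0..<card A}" "h i = a" by (rule imageE) auto
    then show ?thesis using that by simp
  qed
  ultimately show ?thesis by auto
qed

context lg
begin

lemma fin_star:
  assumes "finite {w. x w \<noteq> 0}" "field_involution cj"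
  shows "finite {w. fa_star cj x w \<noteq> 0}"
proof -
  have "{w. fa_star cj x w \<noteq> 0} \<subseteq> (\<lambda>w. map gstar (rev w)) ` {w. x w \<noteq> 0}"
  proof
    fix w assume "w \<in> {w. fa_star cj x w \<noteq> 0}"
    then have "x (map gstar (rev w)) \<noteq> 0" using assms(2) inv_zero unfolding fa_star_def by fastforce
    then show "w \<in> (\<lambda>w. map gstar (rev w)) ` {w. x w \<noteq> 0}"
      by (intro image_eqI[where x="map gstar (rev w)"]) auto
  qed
  then show ?thesis using assms(1) finite_subset by blast
qed

lemma fin_mult:
  assumes "finite {w. p w \<noteq> 0}" "finite {w. q w \<noteq> 0}"
  shows "finite {w. fa_mult p q w \<noteq> 0}"
proof -
  have "{w. fa_mult p q w \<noteq> 0} \<subseteq> (\<lambda>(u, v). u @ v) ` ({w. p w \<noteq> 0} \<times> {w. q w \<noteq> 0})"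
    using fa_mult_nz by fastforce
  then show ?thesis using assms finite_subset by blast
qed

lemma Psi_star:
  fixes x :: "('v,'e,'k::field) fa"
  assumes fx: "finite {w. x w \<noteq> 0}" and cj: "field_involution cj"
  shows "Psi (fa_star cj x) z y = cj (Psi x y z)"
proof -
  let ?sg = "\<lambda>w. map gstar (rev w)"
  have inj: "inj_on ?sg {w. x w \<noteq> 0}" by (rule inj_onI) (metis star_star)
  have "Psi (fa_star cj x) z y = (\<Sum>w\<in>?sg ` {w. x w \<noteq> 0}. fa_star cj x w * (if actw w z = Some y then 1 else 0))"
  proof (rule Psi_sup)
    show "finite (?sg ` {w. x w \<noteq> 0})" using fx by simp
    show "{w. fa_star cj x w \<noteq> 0} \<subseteq> ?sg ` {w. x w \<noteq> 0}"
    proof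
      fix w assume "w \<in> {w. fa_star cj x w \<noteq> 0}"
      then have "x (map gstar (rev w)) \<noteq> 0" using cj inv_zero unfolding fa_star_def by fastforce
      then show "w \<in> ?sg ` {w. x w \<noteq> 0}"
        by (intro image_eqI[where x="map gstar (rev w)"]) auto
    qed
  qed
  also have "\<dots> = (\<Sum>u\<in>{w. x w \<noteq> 0}. fa_star cj x (?sg u) * (if actw (?sg u) z = Some y then 1 else 0))"
    by (rule sum.reindex[OF inj, unfolded comp_def])
  also have "\<dots> = (\<Sum>u\<in>{w. x w \<noteq> 0}. cj (x u * (if actw u y = Some z then 1 else 0)))"
    by (intro sum.cong refl) (simp add: fa_star_def actw_star inv_mult[OF cj] inv_one[OF cj] inv_zero[OF cj])
  also have "\<dots> = cj (Psi x y z)" unfolding Psi_def by (simp add: inv_sum[OF cj])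
  finally show ?thesis .
qed

lemma Psi_xx:
  fixes x :: "('v,'e,'k::field) fa"
  assumes fx: "finite {w. x w \<noteq> 0}" and cj: "field_involution cj"
  shows "\<exists>D. finite D \<and> Psi (fa_mult x (fa_star cj x)) z z = (\<Sum>d\<in>D. Psi x d z * cj (Psi x d z))
     \<and> (\<forall>d. Psi x d z \<noteq> 0 \<longrightarrow> d \<in> D)"
proof -
  have fs: "finite {w. fa_star cj x w \<noteq> 0}" by (rule fin_star[OF fx cj])
  obtain D where D: "finite D" "\<forall>v d. fa_star cj x v \<noteq> 0 \<longrightarrow> actw v z = Some d \<longrightarrow> d \<in> D"
    using Psi_mult_D[OF fs, of z] by blast
  have "Psi (fa_mult x (fa_star cj x)) z z = (\<Sum>d\<in>D. Psi (fa_star cj x) z d * Psi x d z)"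
    by (rule Psi_mult[OF fx fs D(1)]) (use D(2) in blast)
  also have "\<dots> = (\<Sum>d\<in>D. Psi x d z * cj (Psi x d z))"
    by (intro sum.cong refl) (simp only: Psi_star[OF fx cj] mult.commute)
  finally have 1: "Psi (fa_mult x (fa_star cj x)) z z = (\<Sum>d\<in>D. Psi x d z * cj (Psi x d z))" .
  have "Psi x d z \<noteq> 0 \<longrightarrow> d \<in> D" for d
  proof
    assume "Psi x d z \<noteq> 0"
    then obtain u where u: "u \<in> {w. x w \<noteq> 0}" "x u * (if actw u d = Some z then 1 else 0) \<noteq> 0"
      unfolding Psi_def by (meson sum.not_neutral_contains_not_neutral)
    then have u: "x u \<noteq> 0" "actw u d = Some z" by (auto split: if_splits)
    have "fa_star cj x (map gstar (rev u)) \<noteq> 0" using u inv_eq0[OF cj] by (simp add: fa_star_def)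
    moreover have "actw (map gstar (rev u)) z = Some d" using u by (simp add: actw_star)
    ultimately show "d \<in> D" using D(2) by blast
  qed
  then show ?thesis using 1 D(1) by blast
qed

lemma exists_bp:
  assumes "v \<in> V"
  shows "\<exists>b. valid b \<and> src b = v"
proof -
  define pick where "pick u = (SOME e. e \<in> E1 \<and> s e = u)" for u
  define nxt where "nxt u = r (pick u)" for u
  have pk: "regular E1 s u \<Longrightarrow> pick u \<in> E1 \<and> s (pick u) = u" for u
  proof -
    assume "regular E1 s u"
    then have "\<exists>e. e \<in> E1 \<and> s e = u" unfolding regular_def by auto
    then show ?thesis unfolding pick_def by (rule someI_ex)
  qed
  have A: "\<And>u. u \<in> V \<Longrightarrow> \<not> regular E1 s ((nxt ^^ k) u) \<Longrightarrow> \<exists>b. valid b \<and> src b = u" for k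
  proof (induction k)
    case 0
    then have "valid (BF u []) \<and> src (BF u []) = u" by simp
    then show ?case by blast
  next
    case (Suc k)
    show ?case
    proof (cases "regular E1 s u")
      case False
      then have "valid (BF u []) \<and> src (BF u []) = u" using Suc.prems by simp
      then show ?thesis by blast
    next
      case True
      let ?e = "pick u"
      have e: "?e \<in> E1" "s ?e = u" using pk[OF True] by auto
      have "(nxt ^^ Suc k) u = (nxt ^^ k) (r ?e)" by (simp only: funpow_Suc_right comp_def nxt_def)
      then have "\<not> regular E1 s ((nxt ^^ k) (r ?e))"
        using Suc.prems(2) by simp
      then obtain b where b: "valid b" "src b = r ?e" using Suc.IH[of "r ?e"] e by auto
      have "valid (bcons ?e b)" using valid_bcons[OF b(1) e(1)] b(2) by simp
      then show ?thesis using e by (intro exI[of _ "bcons ?e b"]) simp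
    qed
  qed
  show ?thesis
  proof (cases "\<exists>k. \<not> regular E1 s ((nxt ^^ k) v)")
    case True
    then show ?thesis using A assms by blast
  next
    case False
    then have reg: "regular E1 s ((nxt ^^ k) v)" for k by blast
    define f where "f k = pick ((nxt ^^ k) v)" for k
    have "valid (BI f)"
    proof (simp, intro allI conjI)
      fix i
      show "f i \<in> E1" using pk[OF reg] unfolding f_def by blast
      have "s (f (Suc i)) = (nxt ^^ Suc i) v" using pk[OF reg] unfolding f_def by blast
      then show "r (f i) = s (f (Suc i))" unfolding f_def by (simp add: nxt_def)
    qed
    moreover have "src (BI f) = v" using pk[OF reg[of 0]] by (simp add: f_def)
    ultimately show ?thesis by blast
  qed
qed

end


fun isG :: "('v, 'e) gen \<Rightarrow> bool" where
  "isG (Gx e) = True" | "isG (Vx v) = False" | "isG (Ex e) = False"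

definition gl :: "('v, 'e) gen list \<Rightarrow> nat" where
  "gl w = length (filter isG w)"

lemma gl_nw: "gl (nw (\<mu>, \<nu>, j)) = length \<nu>"
  unfolding gl_def nw_def by (auto simp: filter_map comp_def)

lemma map_EG_inj: "map Ex a @ map Gx b = map Ex a' @ map Gx b' \<Longrightarrow> a = a' \<and> b = b'"
proof (induction a arbitrary: a')
  case Nil
  then show ?case
  proof (cases a')
    case Nil
    then show ?thesis using Nil.prems by (simp add: inj_map_eq_map inj_def)
  next
    case (Cons e a0)
    then show ?thesis using Nil.prems by (cases b) auto
  qed
next
  case (Cons e a)
  then show ?case
  proof (cases a')
    case Nil
    then show ?thesis using Cons.prems by (cases b') auto
  next
    case (Cons e' a0)
    then show ?thesis using Cons.prems Cons.IH[of a0] by auto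
  qed
qed

context lg
begin

lemma epath_last: "epath es j \<Longrightarrow> es \<noteq> [] \<Longrightarrow> r (last es) = j"
  by (induction es) (auto split: list.splits)

lemma nw_inj:
  assumes t: "t \<in> T" and t': "t' \<in> T" and eq: "nw t = nw t'"
  shows "t = t'"
proof -
  obtain \<mu> \<nu> j where tt: "t = (\<mu>, \<nu>, j)" by (cases t) auto
  obtain \<mu>' \<nu>' j' where tt': "t' = (\<mu>', \<nu>', j')" by (cases t') auto
  have ep: "epath \<mu> j" "epath \<nu> j" "epath \<mu>' j'" "epath \<nu>' j'" using t t' tt tt' by (auto simp: T_iff)
  have noV: "Vx a \<notin> set (map Ex a1 @ map Gx a2)" for a a1 a2 by auto
  show ?thesis
  proof (cases "\<mu> = [] \<and> \<nu> = []")
    case True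
    show ?thesis
    proof (cases "\<mu>' = [] \<and> \<nu>' = []")
      case True
      then show ?thesis using \<open>\<mu> = [] \<and> \<nu> = []\<close> eq tt tt' by simp
    next
      case False
      then have "nw t' = map Ex \<mu>' @ map Gx (rev \<nu>')" using tt' unfolding nw_def by auto
      moreover have "Vx j \<in> set (nw t)" using tt True by simp
      ultimately show ?thesis using eq noV[of j \<mu>' "rev \<nu>'"] by simp
    qed
  next
    case False
    then have w: "nw t = map Ex \<mu> @ map Gx (rev \<nu>)" using tt unfolding nw_def by auto
    show ?thesis
    proof (cases "\<mu>' = [] \<and> \<nu>' = []")
      case True
      then have "Vx j' \<in> set (nw t')" using tt' by simp
      then show ?thesis using eq w noV[of j' \<mu> "rev \<nu>"] by simp
    next
      case False
      then have "nw t' = map Ex \<mu>' @ map Gx (rev \<nu>')" using tt' unfolding nw_def by auto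
      then have "\<mu> = \<mu>'" "rev \<nu> = rev \<nu>'" using map_EG_inj eq w by metis+
      then have mn: "\<mu> = \<mu>'" "\<nu> = \<nu>'" by simp_all
      have "j = j'"
      proof (cases "\<mu> = []")
        case True
        then have "\<nu> \<noteq> []" using \<open>\<not> (\<mu> = [] \<and> \<nu> = [])\<close> by simp
        then show ?thesis using epath_last[OF ep(2)] epath_last[OF ep(4)] mn by simp
      next
        case False
        then show ?thesis using epath_last[OF ep(1)] epath_last[OF ep(3)] mn by simp
      qed
      then show ?thesis using tt tt' mn by simp
    qed
  qed
qed

lemma src_bpre: "src (bpre \<mu> q) = (case \<mu> of [] \<Rightarrow> src q | f # _ \<Rightarrow> s f)"
  by (cases \<mu>) auto

lemma act_Ex: "epath \<mu> (src q) \<Longrightarrow> actw (map Ex \<mu>) (q, n) = Some (bpre \<mu> q, n + int (length \<mu>))"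
proof (induction \<mu>)
  case Nil
  then show ?case by simp
next
  case (Cons e \<mu>)
  then have "e \<in> E1" "r e = src (bpre \<mu> q)" "epath \<mu> (src q)"
    by (auto simp: src_bpre split: list.splits)
  then show ?case using Cons.IH by (simp add: algebra_simps)
qed

lemma act_Ex_inv: "actw (map Ex \<mu>) z = Some y \<Longrightarrow> y = (bpre \<mu> (fst z), snd z + int (length \<mu>))"
proof (induction \<mu> arbitrary: y)
  case Nil
  then show ?case by (cases z) auto
next
  case (Cons e \<mu>)
  then obtain y0 where "actw (map Ex \<mu>) z = Some y0" "act1 (Ex e) y0 = Some y"
    by (auto simp: bind_eq_Some_conv)
  then show ?case using Cons.IH by (cases y0) (auto split: if_splits)
qed

lemma map_Gx_star: "map gstar (rev (map Ex \<nu>)) = map Gx (rev \<nu>)"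
  by (simp add: rev_map)

lemma act_Gx: "epath \<nu> (src q) \<Longrightarrow> actw (map Gx (rev \<nu>)) (bpre \<nu> q, n + int (length \<nu>)) = Some (q, n)"
  using act_Ex[of \<nu> q n] actw_star[of "map Ex \<nu>"] by (simp add: map_Gx_star)

lemma act_Gx_inv: "actw (map Gx (rev \<nu>)) x = Some z \<Longrightarrow> x = (bpre \<nu> (fst z), snd z + int (length \<nu>))"
  using actw_star[of "map Ex \<nu>" x z] act_Ex_inv[of \<nu> z x] by (simp add: map_Gx_star)

lemma valid_bpre: "valid q \<Longrightarrow> epath \<nu> (src q) \<Longrightarrow> valid (bpre \<nu> q)"
proof (induction \<nu>)
  case (Cons e \<nu>)
  then have "e \<in> E1" "r e = src (bpre \<nu> q)" "epath \<nu> (src q)"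
    by (auto simp: src_bpre split: list.splits)
  then show ?case using Cons.IH Cons.prems valid_bcons by simp
qed simp

lemma nw_act:
  assumes t: "(\<mu>, \<nu>, j) \<in> T" and q: "src q = j"
  shows "actw (nw (\<mu>, \<nu>, j)) (bpre \<nu> q, n) = Some (bpre \<mu> q, n - int (length \<nu>) + int (length \<mu>))"
proof -
  have ep: "epath \<mu> j" "epath \<nu> j" "j \<in> V" using t by (auto simp: T_iff)
  show ?thesis
  proof (cases "\<mu> = [] \<and> \<nu> = []")
    case True
    then show ?thesis using ep q by simp
  next
    case False
    then have w: "nw (\<mu>, \<nu>, j) = map Ex \<mu> @ map Gx (rev \<nu>)" unfolding nw_def by auto
    have "actw (map Gx (rev \<nu>)) (bpre \<nu> q, (n - int (length \<nu>)) + int (length \<nu>)) = Some (q, n - int (length \<nu>))"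
      using act_Gx ep q by blast
    then have "actw (map Gx (rev \<nu>)) (bpre \<nu> q, n) = Some (q, n - int (length \<nu>))" by simp
    then show ?thesis unfolding w actw_append using act_Ex ep q by simp
  qed
qed

lemma nw_unique:
  assumes t: "(\<mu>, \<nu>, j) \<in> T" and t': "(\<mu>', \<nu>', j') \<in> T" and q: "src q = j"
    and len: "length \<nu> \<le> length \<nu>'" and len2: "length \<nu>' \<le> length \<nu> \<or> q = BF j []"
    and act: "actw (nw (\<mu>', \<nu>', j')) (bpre \<nu> q, n) = Some (bpre \<mu> q, n - int (length \<nu>) + int (length \<mu>))"
  shows "nw (\<mu>', \<nu>', j') = nw (\<mu>, \<nu>, j)"
proof (cases "\<mu>' = [] \<and> \<nu>' = []")
  case True
  then have "\<nu> = []" using len by simp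
  then have "Some (q, n) = Some (bpre \<mu> q, n + int (length \<mu>))" "src q = j'"
    using act True by (auto split: if_splits)
  then have "\<mu> = []" "j' = j" using q by auto
  then show ?thesis using True \<open>\<nu> = []\<close> by simp
next
  case False
  then have w: "nw (\<mu>', \<nu>', j') = map Ex \<mu>' @ map Gx (rev \<nu>')" unfolding nw_def by auto
  obtain z where z: "actw (map Gx (rev \<nu>')) (bpre \<nu> q, n) = Some z"
    "actw (map Ex \<mu>') z = Some (bpre \<mu> q, n - int (length \<nu>) + int (length \<mu>))"
    using act unfolding w actw_append by (auto simp: bind_eq_Some_conv)
  have "(bpre \<nu> q, n) = (bpre \<nu>' (fst z), snd z + int (length \<nu>'))" using act_Gx_inv[OF z(1)] .
  then have z1: "bpre \<nu> q = bpre \<nu>' (fst z)" "n = snd z + int (length \<nu>')" by auto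
  obtain \<delta> where d: "\<nu>' = \<nu> @ \<delta>" "q = bpre \<delta> (fst z)" using bpre_eq[OF z1(1) len] by blast
  have "\<delta> = []"
  proof (cases "length \<nu>' \<le> length \<nu>")
    case True then show ?thesis using d by simp
  next
    case False then have "q = BF j []" using len2 by simp
    then show ?thesis using d bpre_BF_nil by metis
  qed
  then have nn: "\<nu>' = \<nu>" "fst z = q" using d by auto
  have "(bpre \<mu> q, n - int (length \<nu>) + int (length \<mu>)) = (bpre \<mu>' (fst z), snd z + int (length \<mu>'))"
    using act_Ex_inv[OF z(2)] .
  then have "bpre \<mu> q = bpre \<mu>' q" "length \<mu> = length \<mu>'" using z1(2) nn by auto
  then have "\<mu>' = \<mu>" using bpre_inj_len by metis
  then have "\<not> (\<mu> = [] \<and> \<nu> = [])" using False nn by simp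
  then have "nw (\<mu>, \<nu>, j) = map Ex \<mu> @ map Gx (rev \<nu>)" unfolding nw_def by auto
  then show ?thesis using w nn \<open>\<mu>' = \<mu>\<close> by simp
qed

lemma Psi_eval:
  fixes qq :: "('v,'e,'k::field) fa"
  assumes fq: "finite {w. qq w \<noteq> 0}" and ns: "nsupp qq"
    and t: "(\<mu>, \<nu>, j) \<in> T" and q: "src q = j"
    and bnd: "\<And>w. qq w \<noteq> 0 \<Longrightarrow> length \<nu> \<le> gl w \<and> (gl w \<le> length \<nu> \<or> q = BF j [])"
  shows "Psi qq (bpre \<nu> q, 0) (bpre \<mu> q, int (length \<mu>) - int (length \<nu>)) = qq (nw (\<mu>, \<nu>, j))"
proof -
  let ?x = "(bpre \<nu> q, 0::int)" and ?y = "(bpre \<mu> q, int (length \<mu>) - int (length \<nu>))"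
  have "Psi qq ?x ?y = (\<Sum>w\<in>{w. qq w \<noteq> 0}. if w = nw (\<mu>, \<nu>, j) then qq w else 0)"
    unfolding Psi_def
  proof (intro sum.cong refl)
    fix w assume w: "w \<in> {w. qq w \<noteq> 0}"
    then obtain t' where t': "t' \<in> T" "w = nw t'" using ns unfolding nsupp_def by auto
    obtain \<mu>' \<nu>' j' where tt: "t' = (\<mu>', \<nu>', j')" by (cases t') auto
    have b: "length \<nu> \<le> length \<nu>'" "length \<nu>' \<le> length \<nu> \<or> q = BF j []"
    proof -
      have "gl w = length \<nu>'" using t'(2) tt by (simp add: gl_nw)
      then show "length \<nu> \<le> length \<nu>'" "length \<nu>' \<le> length \<nu> \<or> q = BF j []"
        using bnd[of w] w by auto
    qed
    show "qq w * (if actw w ?x = Some ?y then 1 else 0) = (if w = nw (\<mu>, \<nu>, j) then qq w else 0)"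
    proof (cases "w = nw (\<mu>, \<nu>, j)")
      case True
      have "actw w ?x = Some ?y" using nw_act[OF t q, of 0] True by simp
      then show ?thesis using True by simp
    next
      case False
      have "actw w ?x \<noteq> Some ?y"
      proof
        assume "actw w ?x = Some ?y"
        then have "actw (nw (\<mu>', \<nu>', j')) (bpre \<nu> q, 0) = Some (bpre \<mu> q, 0 - int (length \<nu>) + int (length \<mu>))"
          using t' tt by simp
        then have "nw (\<mu>', \<nu>', j') = nw (\<mu>, \<nu>, j)"
          using nw_unique[OF t _ q b] t' tt by blast
        then show False using False t' tt by simp
      qed
      then show ?thesis using False by simp
    qed
  qed
  also have "\<dots> = qq (nw (\<mu>, \<nu>, j))" using fq by (auto simp: sum.delta')
  finally show ?thesis .
qed

end


context lg
begin

definition ext :: "'e list \<times> 'e list \<times> 'v \<Rightarrow> 'e \<Rightarrow> 'e list \<times> 'e list \<times> 'v" where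
  "ext t e = (case t of (\<mu>, \<nu>, j) \<Rightarrow> (\<mu> @ [e], \<nu> @ [e], r e))"

lemma ext_T: "(\<mu>, \<nu>, j) \<in> T \<Longrightarrow> e \<in> E1 \<Longrightarrow> s e = j \<Longrightarrow> ext (\<mu>, \<nu>, j) e \<in> T"
  unfolding ext_def by (auto simp: T_iff epath_snoc)

lemma nw_ext: "nw (ext (\<mu>, \<nu>, j) e) = map Ex \<mu> @ [Ex e, Gx e] @ map Gx (rev \<nu>)"
  unfolding ext_def nw_def by simp

lemma gl_ext: "gl (nw (ext (\<mu>, \<nu>, j) e)) = Suc (length \<nu>)"
  using gl_nw[of "\<mu> @ [e]" "\<nu> @ [e]" "r e"] unfolding ext_def by simp

lemma ck_ctx:
  assumes t: "(\<mu>, \<nu>, j) \<in> T" and reg: "regular E1 s j"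
  shows "cong (mono (nw (\<mu>, \<nu>, j)))
     (\<lambda>w. \<Sum>e\<in>{e \<in> E1. s e = j}. 1 * mono (nw (ext (\<mu>, \<nu>, j) e)) w :: 'k::field)"
proof -
  have ep: "epath \<mu> j" "epath \<nu> j" "j \<in> V" using t by (auto simp: T_iff)
  let ?A = "map Ex \<mu>" and ?B = "map Gx (rev \<nu>)"
  have A: "set ?A \<subseteq> gens V E1" and B: "set ?B \<subseteq> gens V E1" using ep by (auto dest!: epath_E1)
  have ck: "cong (mono [Vx j]) (\<lambda>w. \<Sum>e\<in>{e \<in> E1. s e = j}. 1 * mono [Ex e, Gx e] w :: 'k)"
    using r_ck[OF ep(3) reg] by simp
  have vi: "cong (mono (nw (\<mu>, \<nu>, j))) (mono (?A @ [Vx j] @ ?B) :: ('v,'e,'k) fa)"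
  proof (cases "\<mu> = [] \<and> \<nu> = []")
    case True
    then show ?thesis using cong_refl by simp
  next
    case False
    show ?thesis
    proof (cases \<mu> rule: rev_cases)
      case (snoc \<mu>0 f)
      have f: "f \<in> E1" "r f = j" using ep snoc by (auto simp: epath_snoc)
      have A0: "set (map Ex \<mu>0) \<subseteq> gens V E1" using A snoc by auto
      have "cong (mono (map Ex \<mu>0 @ [Ex f] @ ?B)) (mono (map Ex \<mu>0 @ [Ex f, Vx (r f)] @ ?B) :: ('v,'e,'k) fa)"
        using ctx_mono[OF cong_sym[OF r_er[OF f(1)]] A0 B] .
      then show ?thesis using snoc f False unfolding nw_def by simp
    next
      case Nil
      then obtain \<nu>0 f where nf: "\<nu> = \<nu>0 @ [f]" using False by (cases \<nu> rule: rev_cases) auto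
      have f: "f \<in> E1" "r f = j" using ep nf by (auto simp: epath_snoc)
      have B0: "set (map Gx (rev \<nu>0)) \<subseteq> gens V E1" using B nf by auto
      have "cong (mono ([] @ [Gx f] @ map Gx (rev \<nu>0))) (mono ([] @ [Vx (r f), Gx f] @ map Gx (rev \<nu>0)) :: ('v,'e,'k) fa)"
        using ctx_mono[OF cong_sym[OF r_rg[OF f(1)]], of "[]" "map Gx (rev \<nu>0)"] B0 by simp
      then show ?thesis using Nil nf f unfolding nw_def by simp
    qed
  qed
  have "cong (mono (?A @ [Vx j] @ ?B))
     (\<lambda>w. \<Sum>e\<in>{e \<in> E1. s e = j}. 1 * mono (?A @ [Ex e, Gx e] @ ?B) w :: 'k)"
    using ctx_sum[OF ck A B] .
  then show ?thesis using cong_trans[OF vi] by (simp add: nw_ext)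
qed

lemma faithful_step:
  fixes q :: "('v,'e,'k::field) fa"
  assumes nN: "n \<le> N"
    and IH: "\<And>q'::('v,'e,'k) fa. q' \<in> fa_elems V E1 \<Longrightarrow> nsupp q' \<Longrightarrow>
        (\<forall>w. q' w \<noteq> 0 \<longrightarrow> Suc n \<le> gl w \<and> gl w \<le> N) \<Longrightarrow>
        (\<forall>x y. valid_st x \<longrightarrow> Psi q' x y = 0) \<Longrightarrow> q' \<in> lpa_ideal V E1 s r"
    and qe: "q \<in> fa_elems V E1" and ns: "nsupp q"
    and bnd: "\<forall>w. q w \<noteq> 0 \<longrightarrow> n \<le> gl w \<and> gl w \<le> N"
    and ker: "\<forall>x y. valid_st x \<longrightarrow> Psi q x y = 0"
  shows "q \<in> lpa_ideal V E1 s r"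
proof -
  have fq: "finite {w. q w \<noteq> 0}" using qe by (rule fa_elemsD)
  have claim: "regular E1 s j \<and> n < N"
    if t: "(\<mu>, \<nu>, j) \<in> T" and nz: "q (nw (\<mu>, \<nu>, j)) \<noteq> 0" and len: "length \<nu> = n" for \<mu> \<nu> j
  proof (rule ccontr)
    assume nc: "\<not> (regular E1 s j \<and> n < N)"
    have ep: "epath \<mu> j" "epath \<nu> j" "j \<in> V" using t by (auto simp: T_iff)
    obtain q0 where q0: "valid q0" "src q0 = j" "\<not> regular E1 s j \<longrightarrow> q0 = BF j []"
    proof (cases "regular E1 s j")
      case True
      then show ?thesis using exists_bp[OF ep(3)] that by blast
    next
      case False
      then show ?thesis using ep(3) that[of "BF j []"] by simp
    qed
    have b: "length \<nu> \<le> gl w \<and> (gl w \<le> length \<nu> \<or> q0 = BF j [])" if "q w \<noteq> 0" for w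
      using bnd that nc q0(3) nN len by auto
    have "Psi q (bpre \<nu> q0, 0) (bpre \<mu> q0, int (length \<mu>) - int (length \<nu>)) = q (nw (\<mu>, \<nu>, j))"
      by (rule Psi_eval[OF fq ns t q0(2) b])
    moreover have "valid_st (bpre \<nu> q0, 0)" using valid_bpre[OF q0(1)] ep q0(2) by (simp add: valid_st_def)
    ultimately show False using ker nz by simp
  qed
  define Tn where "Tn = {t \<in> T. q (nw t) \<noteq> 0 \<and> gl (nw t) = n}"
  have injT: "inj_on nw Tn" unfolding Tn_def inj_on_def using nw_inj by blast
  have fTn: "finite Tn"
    by (rule finite_imageD[OF finite_subset[OF _ fq] injT]) (auto simp: Tn_def)
  have Tn_reg: "regular E1 s j \<and> n < N" if "(\<mu>, \<nu>, j) \<in> Tn" for \<mu> \<nu> j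
    using claim[of \<mu> \<nu> j] that unfolding Tn_def by (auto simp: gl_nw)
  define out where "out j = {e \<in> E1. s e = j}" for j
  define jn where "jn t = snd (snd t)" for t :: "'e list \<times> 'e list \<times> 'v"
  define qn :: "('v,'e,'k) fa" where "qn = (\<lambda>w. \<Sum>t\<in>Tn. q (nw t) * mono (nw t) w)"
  define Ef :: "'e list \<times> 'e list \<times> 'v \<Rightarrow> ('v,'e,'k) fa" where
    "Ef t = (\<lambda>w. \<Sum>e\<in>out (jn t). 1 * mono (nw (ext t e)) w)" for t
  define E :: "('v,'e,'k) fa" where "E = (\<lambda>w. \<Sum>t\<in>Tn. q (nw t) * Ef t w)"
  have cE: "cong qn E" unfolding qn_def E_def
  proof (rule cong_sum[OF fTn])
    fix t assume tT: "t \<in> Tn"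
    obtain \<mu> \<nu> j where tt: "t = (\<mu>, \<nu>, j)" by (cases t) auto
    have tT': "(\<mu>, \<nu>, j) \<in> T" using tT tt unfolding Tn_def by auto
    have rg: "regular E1 s j" using Tn_reg tT tt by auto
    have "cong (mono (nw (\<mu>, \<nu>, j)) :: ('v,'e,'k) fa)
      (\<lambda>w. \<Sum>e\<in>{e \<in> E1. s e = j}. 1 * mono (nw (ext (\<mu>, \<nu>, j) e)) w)"
      by (rule ck_ctx[OF tT' rg])
    then show "cong (mono (nw t)) (Ef t)" unfolding tt Ef_def out_def jn_def by simp
  qed
  have qn_eq: "qn w = (if gl w = n then q w else 0)" for w
  proof (cases "\<exists>t0\<in>Tn. w = nw t0")
    case True
    then obtain t0 where t0: "t0 \<in> Tn" "w = nw t0" by blast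
    have "qn w = (\<Sum>t\<in>Tn. if t = t0 then q (nw t0) else 0)"
      unfolding qn_def
    proof (intro sum.cong refl)
      fix t assume "t \<in> Tn"
      then have "nw t = nw t0 \<longleftrightarrow> t = t0" using injT t0(1) by (auto dest: inj_onD)
      then show "q (nw t) * mono (nw t) w = (if t = t0 then q (nw t0) else 0)"
        using t0 by (auto simp: mono_def)
    qed
    also have "\<dots> = q w" using t0 fTn by (simp add: sum.delta')
    finally show ?thesis using t0 unfolding Tn_def by simp
  next
    case False
    have "qn w = (\<Sum>t\<in>Tn. 0)" unfolding qn_def
      by (intro sum.cong refl) (use False in \<open>auto simp: mono_def\<close>)
    moreover have "\<not> (gl w = n \<and> q w \<noteq> 0)"
    proof
      assume h: "gl w = n \<and> q w \<noteq> 0"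
      then obtain t where tw: "t \<in> T" "w = nw t" using ns unfolding nsupp_def by blast
      then have "t \<in> Tn" using h unfolding Tn_def by simp
      then show False using False tw by blast
    qed
    ultimately show ?thesis by auto
  qed
  define q' where "q' = fa_add (fa_diff q qn) E"
  have mono_el: "t \<in> T \<Longrightarrow> (mono (nw t) :: ('v,'e,'k) fa) \<in> fa_elems V E1" for t
    by (intro fa_elems_mono nw_gens) auto
  have Ef_el: "Ef t \<in> fa_elems V E1" if "t \<in> Tn" for t
  proof -
    obtain \<mu> \<nu> j where tt: "t = (\<mu>, \<nu>, j)" by (cases t) auto
    have tT: "(\<mu>, \<nu>, j) \<in> T" using that tt unfolding Tn_def by auto
    have "finite (out j)" using Tn_reg that tt unfolding out_def regular_def by auto
    then show ?thesis unfolding Ef_def tt jn_def snd_conv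
    proof (intro fa_elems_sum)
      fix e assume "e \<in> out j"
      then have "ext (\<mu>, \<nu>, j) e \<in> T" using ext_T[OF tT] by (simp add: out_def)
      then show "(mono (nw (ext (\<mu>, \<nu>, j) e)) :: ('v,'e,'k) fa) \<in> fa_elems V E1" by (rule mono_el)
    qed
  qed
  have qn_el: "qn \<in> fa_elems V E1" unfolding qn_def
    by (intro fa_elems_sum fTn) (auto intro!: mono_el simp: Tn_def)
  have E_el: "E \<in> fa_elems V E1" unfolding E_def
    by (intro fa_elems_sum fTn Ef_el)
  have q'_el: "q' \<in> fa_elems V E1" unfolding q'_def
    by (intro fa_elems_add fa_elems_diff qe qn_el E_el)
  have dq: "fa_diff q q' = fa_diff qn E" unfolding q'_def
    by (rule ext) (simp add: fa_diff_def fa_add_def)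
  have cqq: "cong q q'" unfolding cong_def dq using cE unfolding cong_def .
  have ns': "nsupp q' \<and> (\<forall>w. q' w \<noteq> 0 \<longrightarrow> Suc n \<le> gl w \<and> gl w \<le> N)"
  proof -
    have "(\<exists>t\<in>T. w = nw t) \<and> Suc n \<le> gl w \<and> gl w \<le> N" if nz: "q' w \<noteq> 0" for w
    proof (cases "q w - qn w \<noteq> 0")
      case True
      have "gl w \<noteq> n"
      proof
        assume "gl w = n" then have "qn w = q w" using qn_eq[of w] by simp
        then show False using True by simp
      qed
      then have "q w \<noteq> 0" using True qn_eq[of w] by simp
      then have "(\<exists>t\<in>T. w = nw t)" "n \<le> gl w" "gl w \<le> N" using ns bnd unfolding nsupp_def by blast+
      then show ?thesis using \<open>gl w \<noteq> n\<close> by simp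
    next
      case False
      then have "E w \<noteq> 0" using nz unfolding q'_def fa_add_def fa_diff_def by simp
      then obtain t where t: "t \<in> Tn" "q (nw t) * Ef t w \<noteq> 0" unfolding E_def
        by (meson sum.not_neutral_contains_not_neutral)
      then have "Ef t w \<noteq> 0" by simp
      then obtain e where e: "e \<in> out (jn t)" "1 * (mono (nw (ext t e)) w :: 'k) \<noteq> 0" unfolding Ef_def
        by (meson sum.not_neutral_contains_not_neutral)
      obtain \<mu> \<nu> j where tt: "t = (\<mu>, \<nu>, j)" by (cases t) auto
      have tT: "(\<mu>, \<nu>, j) \<in> T" "gl (nw (\<mu>, \<nu>, j)) = n" using t(1) tt unfolding Tn_def by auto
      then have ln: "length \<nu> = n" by (simp add: gl_nw)
      have ee: "e \<in> E1" "s e = j" using e(1) tt unfolding out_def jn_def by auto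
      have w: "w = nw (ext t e)" using e(2) unfolding mono_def by (simp split: if_splits)
      have "n < N" using Tn_reg t(1) tt by blast
      moreover have "ext t e \<in> T" using ext_T[OF tT(1) ee] tt by simp
      moreover have "gl w = Suc n" using w tt gl_ext ln by simp
      ultimately show ?thesis using w by auto
    qed
    then show ?thesis unfolding nsupp_def by blast
  qed
  have ker': "\<forall>x y. valid_st x \<longrightarrow> Psi q' x y = 0"
  proof (intro allI impI)
    fix x y assume vx: "valid_st x"
    have el: "fa_diff q q' \<in> fa_elems V E1" using qe q'_el by (rule fa_elems_diff)
    have "q' = fa_diff q (fa_diff q q')" by (rule ext) (simp add: fa_diff_def)
    then have "Psi q' x y = Psi q x y - Psi (fa_diff q q') x y"
      using Psi_diff[OF fq fa_elemsD(1)[OF el]] by metis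
    also have "\<dots> = 0"
    proof -
      have "Psi q x y = 0" using ker vx by blast
      moreover have "Psi (fa_diff q q') x y = 0" using Psi_kernel[OF cqq[unfolded cong_def] vx] by blast
      ultimately show ?thesis by simp
    qed
    finally show "Psi q' x y = 0" .
  qed
  have "q' \<in> lpa_ideal V E1 s r" using IH[OF q'_el] ns' ker' by blast
  then show ?thesis using cong_ideal[OF cqq] by blast
qed

lemma faithful:
  fixes q :: "('v,'e,'k::field) fa"
  assumes qe: "q \<in> fa_elems V E1" and ns: "nsupp q"
    and ker: "\<forall>x y. valid_st x \<longrightarrow> Psi q x y = 0"
  shows "q \<in> lpa_ideal V E1 s r"
proof -
  have fq: "finite {w. q w \<noteq> 0}" using qe by (rule fa_elemsD)
  define N where "N = (\<Sum>w\<in>{w. q w \<noteq> 0}. gl w)"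
  have gN: "q w \<noteq> 0 \<Longrightarrow> gl w \<le> N" for w
    unfolding N_def using fq by (intro member_le_sum) auto
  define P where "P k \<longleftrightarrow> (\<forall>q'::('v,'e,'k) fa. q' \<in> fa_elems V E1 \<longrightarrow> nsupp q' \<longrightarrow>
        (\<forall>w. q' w \<noteq> 0 \<longrightarrow> k \<le> gl w \<and> gl w \<le> N) \<longrightarrow>
        (\<forall>x y. valid_st x \<longrightarrow> Psi q' x y = 0) \<longrightarrow> q' \<in> lpa_ideal V E1 s r)" for k
  have "P 0"
  proof (rule inc_induct[of 0 "Suc N" P])
    show "P (Suc N)" unfolding P_def
    proof (intro allI impI)
      fix q' :: "('v,'e,'k) fa" assume h: "\<forall>w. q' w \<noteq> 0 \<longrightarrow> Suc N \<le> gl w \<and> gl w \<le> N"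
      have "q' w = 0" for w
      proof (rule ccontr)
        assume "q' w \<noteq> 0"
        then have "Suc N \<le> gl w \<and> gl w \<le> N" using h by blast
        then show False by linarith
      qed
      then have "q' = fa_zero" by (auto simp: fa_zero_def)
      then show "q' \<in> lpa_ideal V E1 s r" by (simp add: lpa_ideal.zero)
    qed
  next
    fix n assume step: "0 \<le> n" "n < Suc N" "P (Suc n)"
    show "P n" unfolding P_def
    proof (intro allI impI)
      fix q' :: "('v,'e,'k) fa"
      assume "q' \<in> fa_elems V E1" "nsupp q'" "\<forall>w. q' w \<noteq> 0 \<longrightarrow> n \<le> gl w \<and> gl w \<le> N"
        "\<forall>x y. valid_st x \<longrightarrow> Psi q' x y = 0"
      moreover have "n \<le> N" using step by simp
      ultimately show "q' \<in> lpa_ideal V E1 s r"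
        using faithful_step[of n N] step(3) unfolding P_def by blast
    qed
  qed simp
  then show ?thesis unfolding P_def using qe ns ker gN by blast
qed

end


lemma fa_mult_smult: "fa_mult (fa_smult a p) (fa_smult b q) = fa_smult (a * b) (fa_mult p q)"
  unfolding fa_mult_def fa_smult_def
  by (rule ext) (simp add: split_def sum_distrib_left mult_ac)

context lg
begin

lemma Psi_invalid_target:
  assumes "valid_st x" "\<not> valid_st y"
  shows "Psi p x y = 0"
  unfolding Psi_def
proof (intro sum.neutral ballI)
  fix w
  have "actw w x \<noteq> Some y" using actw_valid assms by blast
  then show "p w * (if actw w x = Some y then 1 else 0) = 0" by simp
qed

lemma faithful_gen:
  fixes p :: "('v,'e,'k::field) fa"
  assumes pe: "p \<in> fa_elems V E1" and ker: "\<And>x y. valid_st x \<Longrightarrow> valid_st y \<Longrightarrow> Psi p x y = 0"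
  shows "p \<in> lpa_ideal V E1 s r"
proof -
  obtain q :: "('v,'e,'k) fa" where q: "q \<in> fa_elems V E1" "nsupp q" "cong p q" using reduce[OF pe] by blast
  have kp: "Psi p x y = 0" if "valid_st x" for x y
    using ker that Psi_invalid_target by blast
  have "\<forall>x y. valid_st x \<longrightarrow> Psi q x y = 0"
  proof (intro allI impI)
    fix x y assume vx: "valid_st x"
    have el: "fa_diff p q \<in> fa_elems V E1" using pe q(1) by (rule fa_elems_diff)
    have "q = fa_diff p (fa_diff p q)" by (rule ext) (simp add: fa_diff_def)
    then have "Psi q x y = Psi p x y - Psi (fa_diff p q) x y"
      using Psi_diff[OF fa_elemsD(1)[OF pe] fa_elemsD(1)[OF el]] by metis
    also have "\<dots> = 0"
    proof -
      have "Psi p x y = 0" using kp vx by blast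
      moreover have "Psi (fa_diff p q) x y = 0" using Psi_kernel[OF q(3)[unfolded cong_def] vx] by blast
      ultimately show ?thesis by simp
    qed
    finally show "Psi q x y = 0" .
  qed
  then have "q \<in> lpa_ideal V E1 s r" using faithful q by blast
  then show ?thesis using cong_ideal[OF q(3)] by blast
qed

lemma dir_field:
  fixes cj :: "'k::field \<Rightarrow> 'k"
  assumes V: "V \<noteq> {}" and cj: "field_involution cj" and L: "pos_def_lpa V E1 s r cj"
  shows "pos_def_field cj"
  unfolding pos_def_field_def
proof (rule allI, rule allI, rule impI)
  fix n and x :: "nat \<Rightarrow> 'k" assume z: "(\<Sum>i<n. x i * cj (x i)) = 0"
  obtain v0 where v0: "v0 \<in> V" using V by blast
  obtain b0 where b0: "valid b0" "src b0 = v0" using exists_bp[OF v0] by blast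
  define X :: "nat \<Rightarrow> ('v,'e,'k) fa" where "X i = fa_smult (x i) (mono [Vx v0])" for i
  have Xe: "X i \<in> fa_elems V E1" for i unfolding X_def using v0 by (intro fa_elems_smult fa_elems_mono) auto
  have st: "fa_star cj (X i) = fa_smult (cj (x i)) (mono [Vx v0])" for i
  proof (rule ext)
    fix w :: "('v,'e) gen list"
    have "map gstar (rev w) = [Vx v0] \<longleftrightarrow> w = [Vx v0]"
      by (metis star_star gstar.simps(1) list.map(1) list.map(2) rev.simps(1) rev_singleton_conv)
    then show "fa_star cj (X i) w = fa_smult (cj (x i)) (mono [Vx v0]) w"
      unfolding X_def fa_star_def fa_smult_def mono_def
      by (simp add: inv_mult[OF cj] inv_one[OF cj] inv_zero[OF cj])
  qed
  have "(\<lambda>w. \<Sum>i<n. fa_mult (X i) (fa_star cj (X i)) w) = fa_zero"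
  proof (rule ext)
    fix w :: "('v,'e) gen list"
    have "(\<Sum>i<n. fa_mult (X i) (fa_star cj (X i)) w) = (\<Sum>i<n. x i * cj (x i)) * mono [Vx v0, Vx v0] w"
      unfolding st unfolding X_def fa_mult_smult
      by (simp add: fa_mult_mono fa_smult_def sum_distrib_right)
    then show "(\<Sum>i<n. fa_mult (X i) (fa_star cj (X i)) w) = fa_zero w" using z by (simp add: fa_zero_def)
  qed
  then have "(\<lambda>w. \<Sum>i<n. fa_mult (X i) (fa_star cj (X i)) w) \<in> lpa_ideal V E1 s r"
    by (simp add: lpa_ideal.zero)
  then have XI: "\<forall>i<n. X i \<in> lpa_ideal V E1 s r" using L Xe unfolding pos_def_lpa_def by blast
  show "\<forall>i<n. x i = 0"
  proof (intro allI impI)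
    fix i assume "i < n"
    then have "X i \<in> lpa_ideal V E1 s r" using XI by blast
    moreover have "valid_st (b0, 0)" using b0 by (simp add: valid_st_def)
    ultimately have "Psi (X i) (b0, 0) (b0, 0) = 0" by (rule Psi_kernel)
    moreover have "Psi (X i) (b0, 0) (b0, 0) = x i"
      unfolding X_def using b0 v0 by (simp add: Psi_smult fin_mono Psi_mono)
    ultimately show "x i = 0" by simp
  qed
qed

lemma dir_lpa:
  fixes cj :: "'k::field \<Rightarrow> 'k"
  assumes cj: "field_involution cj" and F: "pos_def_field cj"
  shows "pos_def_lpa V E1 s r cj"
  unfolding pos_def_lpa_def
proof (rule allI, rule allI, rule impI, rule impI)
  fix n and x :: "nat \<Rightarrow> ('v,'e,'k) fa"
  assume xe: "\<forall>i<n. x i \<in> fa_elems V E1"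
    and S: "(\<lambda>w. \<Sum>i<n. fa_mult (x i) (fa_star cj (x i)) w) \<in> lpa_ideal V E1 s r"
  have fx: "finite {w. x i w \<noteq> 0}" if "i < n" for i using xe that fa_elemsD(1) by blast
  have zero: "Psi (x i) d z = 0" if i: "i < n" and vz: "valid_st z" for i d z
  proof -
    have "\<forall>j. \<exists>D. j < n \<longrightarrow> finite D \<and> Psi (fa_mult (x j) (fa_star cj (x j))) z z = (\<Sum>d\<in>D. Psi (x j) d z * cj (Psi (x j) d z))
       \<and> (\<forall>d. Psi (x j) d z \<noteq> 0 \<longrightarrow> d \<in> D)"
    proof
      fix j show "\<exists>D. j < n \<longrightarrow> finite D \<and> Psi (fa_mult (x j) (fa_star cj (x j))) z z = (\<Sum>d\<in>D. Psi (x j) d z * cj (Psi (x j) d z))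
       \<and> (\<forall>d. Psi (x j) d z \<noteq> 0 \<longrightarrow> d \<in> D)"
      proof (cases "j < n")
        case True
        then show ?thesis using Psi_xx[OF fx[OF True] cj, of z] by blast
      qed simp
    qed
    from choice[OF this] obtain D where D0: "\<forall>j. j < n \<longrightarrow> finite (D j) \<and>
        Psi (fa_mult (x j) (fa_star cj (x j))) z z = (\<Sum>d\<in>D j. Psi (x j) d z * cj (Psi (x j) d z))
       \<and> (\<forall>d. Psi (x j) d z \<noteq> 0 \<longrightarrow> d \<in> D j)"
      by blast
    have D: "finite (D j) \<and>
        Psi (fa_mult (x j) (fa_star cj (x j))) z z = (\<Sum>d\<in>D j. Psi (x j) d z * cj (Psi (x j) d z))
       \<and> (\<forall>d. Psi (x j) d z \<noteq> 0 \<longrightarrow> d \<in> D j)" if "j < n" for j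
      using D0 that by blast
    have fm: "finite {w. fa_mult (x j) (fa_star cj (x j)) w \<noteq> 0}" if "j \<in> {..<n}" for j
      using that by (intro fin_mult fx fin_star[OF _ cj]) auto
    have "0 = Psi (\<lambda>w. \<Sum>j<n. fa_mult (x j) (fa_star cj (x j)) w) z z"
      using Psi_kernel[OF S vz] by simp
    also have "\<dots> = (\<Sum>j<n. Psi (fa_mult (x j) (fa_star cj (x j))) z z)"
      by (rule Psi_sum) (use fm in auto)
    also have "\<dots> = (\<Sum>j<n. \<Sum>d\<in>D j. Psi (x j) d z * cj (Psi (x j) d z))"
      using D by (intro sum.cong refl) auto
    also have "\<dots> = (\<Sum>(j, d)\<in>Sigma {..<n} D. Psi (x j) d z * cj (Psi (x j) d z))"
      by (rule sum.Sigma) (use D in auto)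
    also have "\<dots> = (\<Sum>p\<in>Sigma {..<n} D. Psi (x (fst p)) (snd p) z * cj (Psi (x (fst p)) (snd p) z))"
      by (simp add: split_def)
    finally have sz: "(\<Sum>p\<in>Sigma {..<n} D. Psi (x (fst p)) (snd p) z * cj (Psi (x (fst p)) (snd p) z)) = 0"
      by simp
    have fS: "finite (Sigma {..<n} D)" using D by (intro finite_SigmaI) auto
    show ?thesis
    proof (rule ccontr)
      assume nz: "Psi (x i) d z \<noteq> 0"
      then have "d \<in> D i" using D[OF i] by blast
      then have "(i, d) \<in> Sigma {..<n} D" using i by simp
      from pos_def_set[OF F fS sz this] nz show False by simp
    qed
  qed
  show "\<forall>i<n. x i \<in> lpa_ideal V E1 s r"
  proof (intro allI impI)
    fix i assume i: "i < n"
    show "x i \<in> lpa_ideal V E1 s r"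
    proof (rule faithful_gen)
      show "x i \<in> fa_elems V E1" using xe i by blast
    next
      fix y z :: "('v,'e) bp \<times> int" assume "valid_st y" "valid_st z"
      then show "Psi (x i) y z = 0" using zero[OF i] by blast
    qed
  qed
qed

end

theorem mainTheorem11:
  fixes V :: "'v set" and E1 :: "'e set" and s r :: "'e \<Rightarrow> 'v"
    and cj :: "'k::field \<Rightarrow> 'k"
  assumes "is_graph V E1 s r"
    and "V \<noteq> {}"
    and "field_involution cj"
  shows "pos_def_lpa V E1 s r cj \<longleftrightarrow> pos_def_field cj"
proof -
  interpret lg V E1 s r by (rule lg.intro) (rule assms(1))
  show ?thesis using dir_field[OF assms(2,3)] dir_lpa[OF assms(3)] by blast
qed


end
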